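(* For every integer $r$, \[\mathcal{H}^r_k = \big(f(D)\,\partial(\overline{L}^\times)\big)^{G_k}\big/\iota(k^\times)\partial(L^\times),\] where $D\in\operatorname{Div}(X_{\overline{k}})$ is any good divisor of degree $r$ (the coset $f(D)\partial(\overline{L}^\times)\subset \overline{M}^\times$ is independent of the choice). In particular $\mathcal{H}^0_k=\partial(\overline{L}^\times)^{G_k}/\iota(k^\times)\partial(L^\times)$.
   Context: Let $p$ be a prime, $k$ a field of characteristic $\neq p$ containing the $p$-th roots of unity, $\overline{k}$ a separable closure, $G_k=\mathrm{Gal}(\overline{k}/k)$. Let $X$ be a smooth projective curve over $k$ with a degree $p$ cyclic cover $X\to\mathbb{P}^1$ over $k$, unramified above $\infty$, given by an affine model $y^p=c\,h(x)$ with $c\in k^\times$ and $h\in k[x]$ monic, $p$-th-power-free, of degree $n$ divisible by $p$; the branch points are the roots of $h$. Let $\Omega\subset X(\overline{k})$ be the set of ramification points, $x(\omega)$ the $x$-coordinate of $\omega$, and $\mathfrak{m}$ the pullback of $\infty$. Write $h=\prod_{i=1}^e h_i^{n_i}$ with distinct monic irreducible $h_i$; let $L=k[x]/(h_1\cdots h_e)\cong K_1\times\dots\times K_e$ ($K_i=k[x]/(h_i)$), and $N:L\to k$ the weighted norm $N(\alpha_1,\dots,\alpha_e)=\prod_i N_{K_i/k}(\alpha_i)^{n_i}$. Let $M=L\times k$, $\partial:L^\times\to M^\times$, $\alpha\mapsto(\alpha^p,N(\alpha))$, and $\iota:k^\times\to M^\times$, $a\mapsto(a,a^{n/p})$. Write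 $\overline{L}=L\otimes_k\overline{k}\cong\mathrm{Map}(\Omega,\overline{k})$, $\overline{M}=M\otimes_k\overline{k}$, with the same maps extended. A divisor on $X_{\overline{k}}$ is good if its support is disjoint from $\Omega$ and from the support of $\mathfrak{m}$. For an affine point $P=(x_0,y_0)\in X(\overline{k})$ not in $\Omega$, set $f(P)=\big((x_0-x(\omega))_{\omega\in\Omega},\,y_0\big)\in \overline{L}^\times\times\overline{k}^\times=\overline{M}^\times$, and for a good divisor $D=\sum n_P[P]$ set $f(D)=\prod_P f(P)^{n_P}$. For $r\in\mathbb{Z}$, \[\mathcal{H}^r_k=\frac{\{(\alpha,s)\in L^\times\times k^\times: c^rN(\alpha)=s^p\}}{\{(\gamma\alpha^p,\gamma^{n/p}N(\alpha)):\alpha\in L^\times,\gamma\in k^\times\}}\subset M^\times/\iota(k^\times)\partial(L^\times).\] *)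

theory Defs
  imports "HOL-Computational_Algebra.Polynomial"
begin

text \<open>Model: the separable closure kbar is the whole type 'a; the base field k is a subset.\<close>

definition is_subfield :: "'a::field set \<Rightarrow> bool" where
  "is_subfield k \<longleftrightarrow> 0 \<in> k \<and> 1 \<in> k \<and> (\<forall>x\<in>k. \<forall>y\<in>k. x + y \<in> k \<and> x * y \<in> k)
     \<and> (\<forall>x\<in>k. - x \<in> k \<and> inverse x \<in> k)"

definition poly_over :: "'a::field set \<Rightarrow> 'a poly \<Rightarrow> bool" where
  "poly_over k g \<longleftrightarrow> (\<forall>i. coeff g i \<in> k)"

definition separable_poly :: "'a::field poly \<Rightarrow> bool" where
  "separable_poly g \<longleftrightarrow> coprime g (pderiv g)"

definition is_separable_closure_of :: "'a::field set \<Rightarrow> bool" where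
  "is_separable_closure_of k \<longleftrightarrow> is_subfield k
     \<and> (\<forall>x. \<exists>g. g \<noteq> 0 \<and> poly_over k g \<and> separable_poly g \<and> poly g x = 0)
     \<and> (\<forall>g::'a poly. degree g > 0 \<longrightarrow> separable_poly g \<longrightarrow> (\<exists>x. poly g x = 0))"

definition Gal :: "'a::field set \<Rightarrow> ('a \<Rightarrow> 'a) set" where
  "Gal k = {\<sigma>. bij \<sigma> \<and> (\<forall>x y. \<sigma> (x + y) = \<sigma> x + \<sigma> y) \<and> (\<forall>x y. \<sigma> (x * y) = \<sigma> x * \<sigma> y)
              \<and> (\<forall>x\<in>k. \<sigma> x = x)}"

text \<open>Omega is identified with the set of roots of h in kbar (the branch points).\<close>
definition Rts :: "'a::field poly \<Rightarrow> 'a set" where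
  "Rts h = {\<omega>. poly h \<omega> = 0}"

text \<open>Elements of Lbar^x = Map(Omega, kbar^x), normalised to 1 off Omega.\<close>
definition Lbar_units :: "'a::field poly \<Rightarrow> ('a \<Rightarrow> 'a) set" where
  "Lbar_units h = {\<alpha>. (\<forall>\<omega>\<in>Rts h. \<alpha> \<omega> \<noteq> 0) \<and> (\<forall>\<omega>. \<omega> \<notin> Rts h \<longrightarrow> \<alpha> \<omega> = 1)}"

text \<open>L^x = (k[x]/(h_1...h_e))^x, embedded in Lbar^x via evaluation at the roots.\<close>
definition L_units :: "'a::field set \<Rightarrow> 'a poly \<Rightarrow> ('a \<Rightarrow> 'a) set" where
  "L_units k h = {\<alpha> \<in> Lbar_units h. \<exists>g. poly_over k g \<and> (\<forall>\<omega>\<in>Rts h. \<alpha> \<omega> = poly g \<omega>)}"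

text \<open>Weighted norm N(alpha) = prod_i N_{K_i/k}(alpha_i)^{n_i}, written over kbar.\<close>
definition wnorm :: "'a::field poly \<Rightarrow> ('a \<Rightarrow> 'a) \<Rightarrow> 'a" where
  "wnorm h \<alpha> = (\<Prod>\<omega>\<in>Rts h. \<alpha> \<omega> ^ order \<omega> h)"

text \<open>Mbar^x = Lbar^x \<times> kbar^x with componentwise multiplication.\<close>
definition mmul :: "('a \<Rightarrow> 'a::field) \<times> 'a \<Rightarrow> ('a \<Rightarrow> 'a) \<times> 'a \<Rightarrow> ('a \<Rightarrow> 'a) \<times> 'a" where
  "mmul m m' = ((\<lambda>\<omega>. fst m \<omega> * fst m' \<omega>), snd m * snd m')"

definition bd :: "nat \<Rightarrow> 'a::field poly \<Rightarrow> ('a \<Rightarrow> 'a) \<Rightarrow> ('a \<Rightarrow> 'a) \<times> 'a" where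
  "bd p h \<alpha> = ((\<lambda>\<omega>. \<alpha> \<omega> ^ p), wnorm h \<alpha>)"

definition iota :: "nat \<Rightarrow> 'a::field poly \<Rightarrow> 'a \<Rightarrow> ('a \<Rightarrow> 'a) \<times> 'a" where
  "iota p h a = ((\<lambda>\<omega>. if \<omega> \<in> Rts h then a else 1), a ^ (degree h div p))"

definition Hsub :: "'a::field set \<Rightarrow> nat \<Rightarrow> 'a poly \<Rightarrow> (('a \<Rightarrow> 'a) \<times> 'a) set" where
  "Hsub k p h = {mmul (iota p h \<gamma>) (bd p h \<alpha>) | \<gamma> \<alpha>. \<gamma> \<in> k \<and> \<gamma> \<noteq> 0 \<and> \<alpha> \<in> L_units k h}"

definition mcoset :: "('a \<Rightarrow> 'a::field) \<times> 'a \<Rightarrow> (('a \<Rightarrow> 'a) \<times> 'a) set \<Rightarrow> (('a \<Rightarrow> 'a) \<times> 'a) set" where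
  "mcoset m S = mmul m ` S"

text \<open>H^r_k as a subset of M^x / iota(k^x) bd(L^x) (a set of cosets).\<close>
definition Hcal :: "'a::field set \<Rightarrow> nat \<Rightarrow> 'a \<Rightarrow> 'a poly \<Rightarrow> int \<Rightarrow> (('a \<Rightarrow> 'a) \<times> 'a) set set" where
  "Hcal k p c h r = (\<lambda>m. mcoset m (Hsub k p h)) `
      {(\<alpha>, s). \<alpha> \<in> L_units k h \<and> s \<in> k \<and> s \<noteq> 0 \<and> c powi r * wnorm h \<alpha> = s ^ p}"

definition gact :: "'a::field poly \<Rightarrow> ('a \<Rightarrow> 'a) \<Rightarrow> ('a \<Rightarrow> 'a) \<times> 'a \<Rightarrow> ('a \<Rightarrow> 'a) \<times> 'a" where
  "gact h \<sigma> m = ((\<lambda>\<omega>. if \<omega> \<in> Rts h then \<sigma> (fst m (inv \<sigma> \<omega>)) else 1), \<sigma> (snd m))"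

definition invariants :: "'a::field set \<Rightarrow> 'a poly \<Rightarrow> (('a \<Rightarrow> 'a) \<times> 'a) set \<Rightarrow> (('a \<Rightarrow> 'a) \<times> 'a) set" where
  "invariants k h S = {m \<in> S. \<forall>\<sigma>\<in>Gal k. gact h \<sigma> m = m}"

text \<open>Affine points of X(kbar) outside Omega: y^p = c h(x), y \<noteq> 0. These are exactly the
  points allowed in the support of a good divisor.\<close>
definition good_points :: "nat \<Rightarrow> 'a::field \<Rightarrow> 'a poly \<Rightarrow> ('a \<times> 'a) set" where
  "good_points p c h = {(x0, y0). y0 ^ p = c * poly h x0 \<and> y0 \<noteq> 0}"

definition good_divisor :: "nat \<Rightarrow> 'a::field \<Rightarrow> 'a poly \<Rightarrow> ('a \<times> 'a \<Rightarrow> int) \<Rightarrow> bool" where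
  "good_divisor p c h D \<longleftrightarrow> finite {P. D P \<noteq> 0} \<and> {P. D P \<noteq> 0} \<subseteq> good_points p c h"

definition div_degree :: "('a \<times> 'a \<Rightarrow> int) \<Rightarrow> int" where
  "div_degree D = (\<Sum>P\<in>{P. D P \<noteq> 0}. D P)"

definition fdiv :: "'a::field poly \<Rightarrow> ('a \<times> 'a \<Rightarrow> int) \<Rightarrow> ('a \<Rightarrow> 'a) \<times> 'a" where
  "fdiv h D = ((\<lambda>\<omega>. if \<omega> \<in> Rts h then (\<Prod>P\<in>{P. D P \<noteq> 0}. (fst P - \<omega>) powi D P) else 1),
               (\<Prod>P\<in>{P. D P \<noteq> 0}. snd P powi D P))"

end

theory Submission
  imports Defs
begin


section \<open>Subfields\<close>

lemma sf_0: "is_subfield E \<Longrightarrow> 0 \<in> E" and sf_1: "is_subfield E \<Longrightarrow> 1 \<in> E"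
  by (auto simp: is_subfield_def)
lemma sf_add: "is_subfield E \<Longrightarrow> x \<in> E \<Longrightarrow> y \<in> E \<Longrightarrow> x + y \<in> E"
  by (auto simp: is_subfield_def)
lemma sf_mult: "is_subfield E \<Longrightarrow> x \<in> E \<Longrightarrow> y \<in> E \<Longrightarrow> x * y \<in> E"
  by (auto simp: is_subfield_def)
lemma sf_uminus: "is_subfield E \<Longrightarrow> x \<in> E \<Longrightarrow> - x \<in> E"
  by (auto simp: is_subfield_def)
lemma sf_inverse: "is_subfield E \<Longrightarrow> x \<in> E \<Longrightarrow> inverse x \<in> E"
  by (auto simp: is_subfield_def)
lemma sf_diff: "is_subfield E \<Longrightarrow> x \<in> E \<Longrightarrow> y \<in> E \<Longrightarrow> x - y \<in> E"
  by (metis diff_conv_add_uminus sf_add sf_uminus)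
lemma sf_divide: "is_subfield E \<Longrightarrow> x \<in> E \<Longrightarrow> y \<in> E \<Longrightarrow> x / y \<in> E"
  by (metis divide_inverse sf_inverse sf_mult)
lemma sf_power: "is_subfield E \<Longrightarrow> x \<in> E \<Longrightarrow> x ^ n \<in> E"
  by (induction n) (auto intro: sf_1 sf_mult)
lemma sf_sum: "is_subfield E \<Longrightarrow> (\<And>i. i \<in> A \<Longrightarrow> f i \<in> E) \<Longrightarrow> sum f A \<in> E"
  by (induction A rule: infinite_finite_induct) (auto intro: sf_0 sf_add)
lemma sf_prod: "is_subfield E \<Longrightarrow> (\<And>i. i \<in> A \<Longrightarrow> f i \<in> E) \<Longrightarrow> prod f A \<in> E"
  by (induction A rule: infinite_finite_induct) (auto intro: sf_1 sf_mult)
lemma sf_of_nat: "is_subfield E \<Longrightarrow> of_nat n \<in> E"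
  by (induction n) (auto intro: sf_0 sf_1 sf_add)

section \<open>Polynomials over a subfield\<close>

lemma po_0[simp]: "poly_over E 0 \<longleftrightarrow> 0 \<in> E"
  by (auto simp: poly_over_def)
lemma po_pCons: "poly_over E (pCons a p) \<longleftrightarrow> a \<in> E \<and> poly_over E p"
  by (auto simp: poly_over_def coeff_pCons split: nat.splits)
lemma po_const: "is_subfield E \<Longrightarrow> a \<in> E \<Longrightarrow> poly_over E [:a:]"
  by (simp add: po_pCons sf_0)
lemma po_coeff: "poly_over E p \<Longrightarrow> coeff p i \<in> E"
  by (simp add: poly_over_def)
lemma po_add: "is_subfield E \<Longrightarrow> poly_over E p \<Longrightarrow> poly_over E q \<Longrightarrow> poly_over E (p + q)"
  by (simp add: poly_over_def sf_add)
lemma po_uminus: "is_subfield E \<Longrightarrow> poly_over E p \<Longrightarrow> poly_over E (- p)"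
  by (simp add: poly_over_def sf_uminus)
lemma po_diff: "is_subfield E \<Longrightarrow> poly_over E p \<Longrightarrow> poly_over E q \<Longrightarrow> poly_over E (p - q)"
  by (simp add: poly_over_def sf_diff)
lemma po_smult: "is_subfield E \<Longrightarrow> a \<in> E \<Longrightarrow> poly_over E p \<Longrightarrow> poly_over E (smult a p)"
  by (simp add: poly_over_def sf_mult)
lemma po_mult: "is_subfield E \<Longrightarrow> poly_over E p \<Longrightarrow> poly_over E q \<Longrightarrow> poly_over E (p * q)"
  unfolding poly_over_def coeff_mult by (auto intro!: sf_sum sf_mult)
lemma po_1: "is_subfield E \<Longrightarrow> poly_over E 1"
  by (simp add: poly_over_def coeff_1 sf_0 sf_1)
lemma po_power: "is_subfield E \<Longrightarrow> poly_over E p \<Longrightarrow> poly_over E (p ^ n)"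
  by (induction n) (auto intro: po_1 po_mult)
lemma po_monom: "is_subfield E \<Longrightarrow> a \<in> E \<Longrightarrow> poly_over E (monom a n)"
  by (simp add: poly_over_def coeff_monom sf_0)
lemma po_sum: "is_subfield E \<Longrightarrow> (\<And>i. i \<in> A \<Longrightarrow> poly_over E (f i)) \<Longrightarrow> poly_over E (sum f A)"
  by (induction A rule: infinite_finite_induct) (auto intro: sf_0 po_add)
lemma po_prod: "is_subfield E \<Longrightarrow> (\<And>i. i \<in> A \<Longrightarrow> poly_over E (f i)) \<Longrightarrow> poly_over E (prod f A)"
  by (induction A rule: infinite_finite_induct) (auto intro: po_1 po_mult)
lemma po_X: "is_subfield E \<Longrightarrow> poly_over E [:0,1:]"
  by (simp add: po_pCons sf_0 sf_1)
lemma po_pderiv: "is_subfield E \<Longrightarrow> poly_over E p \<Longrightarrow> poly_over E (pderiv p)"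
  by (simp add: poly_over_def coeff_pderiv sf_mult sf_add sf_1 sf_of_nat)
lemma po_mono: "E \<subseteq> F \<Longrightarrow> poly_over E p \<Longrightarrow> poly_over F p"
  by (auto simp: poly_over_def)
lemma po_lead: "poly_over E p \<Longrightarrow> lead_coeff p \<in> E"
  by (simp add: poly_over_def)

lemma po_divmod:
  assumes E: "is_subfield E" and f: "poly_over E f" and q: "poly_over E q" "q \<noteq> 0"
  shows "\<exists>s r. poly_over E s \<and> poly_over E r \<and> f = s * q + r \<and> (r = 0 \<or> degree r < degree q)"
  using f
proof (induction f rule: pCons_induct)
  case 0
  then show ?case by (intro exI[of _ 0]) (auto simp: sf_0 E)
next
  case (pCons a f0)
  from pCons.prems have a: "a \<in> E" and f0: "poly_over E f0" by (auto simp: po_pCons)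
  from pCons.IH[OF f0] obtain s0 r0 where s0: "poly_over E s0" and r0: "poly_over E r0"
    and eq: "f0 = s0 * q + r0" and dr: "r0 = 0 \<or> degree r0 < degree q" by blast
  define r1 where "r1 = pCons a r0"
  have r1: "poly_over E r1" using a r0 by (simp add: r1_def po_pCons)
  have dr1: "degree r1 \<le> degree q" using dr by (cases "r0 = 0") (auto simp: r1_def degree_pCons_eq_if)
  define c where "c = coeff r1 (degree q) / lead_coeff q"
  have c: "c \<in> E" using E r1 q by (simp add: c_def sf_divide po_coeff po_lead)
  define r where "r = r1 - smult c q"
  have r: "poly_over E r" unfolding r_def by (intro po_diff po_smult E c r1 q)
  have crq: "coeff r (degree q) = 0" using q(2) by (simp add: r_def c_def)
  have drq: "degree r \<le> degree q" unfolding r_def using dr1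
    by (meson degree_diff_le degree_smult_le)
  have "r = 0 \<or> degree r < degree q"
  proof (cases "r = 0")
    case False
    then have "degree r \<noteq> degree q" using crq by (metis leading_coeff_0_iff)
    then show ?thesis using drq by simp
  qed simp
  moreover have "pCons a f0 = (pCons c s0) * q + r"
    unfolding eq r_def r1_def by (simp add: algebra_simps)
  moreover have "poly_over E (pCons c s0)" using c s0 by (simp add: po_pCons)
  ultimately show ?case using r by blast
qed

lemma po_dvd_quot:
  assumes E: "is_subfield E" and f: "poly_over E f" and q: "poly_over E q" "q \<noteq> 0"
    and d: "q dvd f"
  shows "\<exists>e. poly_over E e \<and> f = q * e"
proof -
  obtain s r where s: "poly_over E s" and r: "poly_over E r" and eq: "f = s * q + r"
    and dr: "r = 0 \<or> degree r < degree q" using po_divmod[OF E f q] by blast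
  have "q dvd r" using d eq by (metis dvd_add_right_iff dvd_triv_right)
  then have "r = 0" using dr q(2) by (metis dvd_imp_degree_le not_le)
  then show ?thesis using eq s by (auto simp: mult.commute)
qed



definition is_minpoly :: "'a::field set \<Rightarrow> 'a \<Rightarrow> 'a poly \<Rightarrow> bool" where
  "is_minpoly E y q \<longleftrightarrow> poly_over E q \<and> q \<noteq> 0 \<and> poly q y = 0 \<and>
     (\<forall>g. poly_over E g \<and> g \<noteq> 0 \<and> poly g y = 0 \<longrightarrow> degree q \<le> degree g)"

definition algebraic_over :: "'a::field set \<Rightarrow> 'a \<Rightarrow> bool" where
  "algebraic_over E y \<longleftrightarrow> (\<exists>g. g \<noteq> 0 \<and> poly_over E g \<and> poly g y = 0)"

lemma minpoly_exists:
  assumes "algebraic_over E y" shows "\<exists>q. is_minpoly E y q"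
proof -
  let ?P = "\<lambda>n. \<exists>g. g \<noteq> 0 \<and> poly_over E g \<and> poly g y = 0 \<and> degree g = n"
  from assms obtain g where "g \<noteq> 0 \<and> poly_over E g \<and> poly g y = 0"
    unfolding algebraic_over_def by blast
  then have "?P (degree g)" by blast
  then obtain n where n: "?P n" and least: "\<And>m. ?P m \<Longrightarrow> n \<le> m"
    using ex_has_least_nat[of ?P "degree g" id] by auto
  from n obtain q where q: "q \<noteq> 0 \<and> poly_over E q \<and> poly q y = 0 \<and> degree q = n" by blast
  have "is_minpoly E y q" unfolding is_minpoly_def using q least by blast
  then show ?thesis by blast
qed

lemma minpoly_dvd:
  assumes E: "is_subfield E" and m: "is_minpoly E y q" and f: "poly_over E f" and fy: "poly f y = 0"
  shows "\<exists>e. poly_over E e \<and> f = q * e"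
proof -
  have q: "poly_over E q" "q \<noteq> 0" "poly q y = 0" using m by (auto simp: is_minpoly_def)
  obtain s r where s: "poly_over E s" and r: "poly_over E r" and eq: "f = s * q + r"
    and dr: "r = 0 \<or> degree r < degree q" using po_divmod[OF E f q(1,2)] by blast
  have "poly r y = 0" using fy q(3) eq by simp
  then have "r = 0" using dr m r unfolding is_minpoly_def by (meson not_le)
  then show ?thesis using eq s by (auto simp: mult.commute)
qed

lemma minpoly_degree_pos:
  assumes "is_minpoly E y q" shows "degree q > 0"
  using assms unfolding is_minpoly_def
  by (metis degree0_coeffs gr0I poly_pCons poly_0 mult_zero_right add.right_neutral pCons_0_0)

lemma minpoly_irred:
  assumes m: "is_minpoly E y q" and a: "poly_over E a" and b: "poly_over E b" and eq: "q = a * b"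
  shows "degree a = 0 \<or> degree b = 0"
proof -
  have q0: "q \<noteq> 0" and qy: "poly q y = 0" using m by (auto simp: is_minpoly_def)
  have a0: "a \<noteq> 0" and b0: "b \<noteq> 0" using q0 eq by auto
  have dq: "degree q = degree a + degree b" using eq a0 b0 by (simp add: degree_mult_eq)
  have "poly a y = 0 \<or> poly b y = 0" using qy eq by simp
  then show ?thesis
  proof
    assume "poly a y = 0"
    then have "degree q \<le> degree a" using m a a0 unfolding is_minpoly_def by blast
    then show ?thesis using dq by simp
  next
    assume "poly b y = 0"
    then have "degree q \<le> degree b" using m b b0 unfolding is_minpoly_def by blast
    then show ?thesis using dq by simp
  qed
qed

lemma po_bezout:
  assumes E: "is_subfield E"
  shows "poly_over E a \<Longrightarrow> poly_over E b \<Longrightarrow> \<exists>u v d. poly_over E u \<and> poly_over E v \<and> poly_over E d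
           \<and> d = u * a + v * b \<and> d dvd a \<and> d dvd b"
proof (induction "if b = 0 then 0 else Suc (degree b)" arbitrary: a b rule: less_induct)
  case less
  show ?case
  proof (cases "b = 0")
    case True
    then show ?thesis using less.prems E
      by (intro exI[of _ 1] exI[of _ 0] exI[of _ a]) (auto simp: po_1 sf_0)
  next
    case False
    obtain s r where s: "poly_over E s" and r: "poly_over E r" and eq: "a = s * b + r"
      and dr: "r = 0 \<or> degree r < degree b" using po_divmod[OF E less.prems False] by blast
    have "(if r = 0 then 0 else Suc (degree r)) < (if b = 0 then 0 else Suc (degree b))"
      using dr False by auto
    from less.hyps[OF this less.prems(2) r] obtain u v d where
      uvd: "poly_over E u" "poly_over E v" "poly_over E d" "d = u * b + v * r" "d dvd b" "d dvd r"
      by blast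
    have "d = v * a + (u - v * s) * b" using uvd(4) eq by (simp add: algebra_simps)
    moreover have "d dvd a" using eq uvd by auto
    moreover have "poly_over E (u - v * s)" using uvd s E by (intro po_diff po_mult) auto
    ultimately show ?thesis using uvd by blast
  qed
qed

definition adj :: "'a::field set \<Rightarrow> 'a \<Rightarrow> 'a set" where
  "adj E y = {poly f y | f. poly_over E f}"

lemma adj_inverse:
  assumes E: "is_subfield E" and m: "is_minpoly E y q" and f: "poly_over E f" and fy: "poly f y \<noteq> 0"
  shows "\<exists>g. poly_over E g \<and> poly g y * poly f y = 1"
proof -
  have q: "poly_over E q" "q \<noteq> 0" "poly q y = 0" using m by (auto simp: is_minpoly_def)
  obtain u v d where uvd: "poly_over E u" "poly_over E v" "poly_over E d" "d = u * f + v * q"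
      "d dvd f" "d dvd q" using po_bezout[OF E f q(1)] by blast
  have dy: "poly d y = poly u y * poly f y" using uvd(4) q(3) by simp
  have "poly d y \<noteq> 0"
  proof
    assume "poly d y = 0"
    then obtain e where "d = q * e" using minpoly_dvd[OF E m uvd(3)] by blast
    then have "q dvd f" using uvd(5) by (metis dvd_mult_left)
    then show False using fy q(3) by (metis dvd_def mult_zero_left poly_mult)
  qed
  then have d0: "d \<noteq> 0" by auto
  obtain e where e: "poly_over E e" "q = d * e" using po_dvd_quot[OF E q(1) uvd(3) d0 uvd(6)] by blast
  have "degree d = 0 \<or> degree e = 0" using minpoly_irred[OF m uvd(3) e(1) e(2)] .
  moreover have "degree e \<noteq> 0"
  proof
    assume "degree e = 0"
    have "poly e y = 0" using e(2) q(3) \<open>poly d y \<noteq> 0\<close> by simp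
    then have "e = 0" using \<open>degree e = 0\<close> by (metis degree0_coeffs poly_pCons poly_0 mult_zero_right add.right_neutral pCons_0_0)
    then show False using e(2) q(2) by simp
  qed
  ultimately have "degree d = 0" by simp
  then obtain c where c: "d = [:c:]" by (metis degree0_coeffs)
  have cE: "c \<in> E" using uvd(3) c by (metis coeff_pCons_0 po_coeff)
  have c0: "c \<noteq> 0" using d0 c by simp
  have "poly (smult (inverse c) u) y * poly f y = 1"
    using dy c c0 by (simp add: field_simps)
  moreover have "poly_over E (smult (inverse c) u)" using E cE uvd(1) by (simp add: po_smult sf_inverse)
  ultimately show ?thesis by blast
qed

lemma adj_subfield:
  assumes E: "is_subfield E" and alg: "algebraic_over E y"
  shows "is_subfield (adj E y)"
proof -
  obtain q where m: "is_minpoly E y q" using minpoly_exists[OF alg] by blast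
  show ?thesis unfolding is_subfield_def adj_def
  proof (intro conjI ballI)
    show "0 \<in> {poly f y |f. poly_over E f}" using E by (auto intro!: exI[of _ 0] simp: sf_0)
    show "1 \<in> {poly f y |f. poly_over E f}" using E by (auto intro!: exI[of _ 1] simp: po_1)
  next
    fix a b assume "a \<in> {poly f y |f. poly_over E f}" "b \<in> {poly f y |f. poly_over E f}"
    then obtain f g where "a = poly f y" "b = poly g y" "poly_over E f" "poly_over E g" by blast
    then show "a + b \<in> {poly f y |f. poly_over E f}"
      using E by (auto intro!: exI[of _ "f + g"] po_add)
    show "a * b \<in> {poly f y |f. poly_over E f}"
      using E \<open>a = poly f y\<close> \<open>b = poly g y\<close> \<open>poly_over E f\<close> \<open>poly_over E g\<close>
      by (auto intro!: exI[of _ "f * g"] po_mult)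
  next
    fix a assume "a \<in> {poly f y |f. poly_over E f}"
    then obtain f where f: "a = poly f y" "poly_over E f" by blast
    then show "- a \<in> {poly f y |f. poly_over E f}"
      using E by (auto intro!: exI[of _ "- f"] po_uminus)
    show "inverse a \<in> {poly f y |f. poly_over E f}"
    proof (cases "a = 0")
      case True then show ?thesis using E by (auto intro!: exI[of _ 0] simp: sf_0)
    next
      case False
      then obtain g where "poly_over E g" "poly g y * a = 1"
        using adj_inverse[OF E m f(2)] f(1) by blast
      then have "inverse a = poly g y" using False by (metis inverse_unique mult.commute)
      then show ?thesis using \<open>poly_over E g\<close> by blast
    qed
  qed
qed

lemma adj_base: "is_subfield E \<Longrightarrow> z \<in> E \<Longrightarrow> z \<in> adj E y"
  unfolding adj_def by (auto intro!: exI[of _ "[:z:]"] po_const)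

lemma adj_gen: "is_subfield E \<Longrightarrow> y \<in> adj E y"
  unfolding adj_def by (auto intro!: exI[of _ "[:0,1:]"] po_X)



definition emb :: "'a::field set \<Rightarrow> ('a \<Rightarrow> 'a) \<Rightarrow> bool" where
  "emb F \<phi> \<longleftrightarrow> is_subfield F \<and> \<phi> 1 = 1 \<and> (\<forall>a\<in>F. \<forall>b\<in>F. \<phi> (a + b) = \<phi> a + \<phi> b \<and> \<phi> (a * b) = \<phi> a * \<phi> b)"

context fixes F :: "'a::field set" and \<phi> assumes em: "emb F \<phi>"
begin

lemma em_sf: "is_subfield F" using em by (simp add: emb_def)
lemma em_add: "a \<in> F \<Longrightarrow> b \<in> F \<Longrightarrow> \<phi> (a + b) = \<phi> a + \<phi> b" using em by (simp add: emb_def)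
lemma em_mult: "a \<in> F \<Longrightarrow> b \<in> F \<Longrightarrow> \<phi> (a * b) = \<phi> a * \<phi> b" using em by (simp add: emb_def)
lemma em_1: "\<phi> 1 = 1" using em by (simp add: emb_def)
lemma em_0: "\<phi> 0 = 0"
proof -
  have "\<phi> 0 + \<phi> 0 = \<phi> 0 + 0" using em_add[of 0 0] sf_0[OF em_sf] by simp
  then show ?thesis by (rule add_left_imp_eq)
qed
lemma em_uminus: "a \<in> F \<Longrightarrow> \<phi> (- a) = - \<phi> a"
proof -
  assume a: "a \<in> F"
  have "\<phi> a + \<phi> (- a) = 0" using em_add[of a "- a"] sf_uminus[OF em_sf] a em_0 by simp
  then show ?thesis by (simp add: add_eq_0_iff2)
qed
lemma em_diff: "a \<in> F \<Longrightarrow> b \<in> F \<Longrightarrow> \<phi> (a - b) = \<phi> a - \<phi> b"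
proof -
  assume a: "a \<in> F" and b: "b \<in> F"
  have "\<phi> (a + - b) = \<phi> a + \<phi> (- b)" using a b sf_uminus[OF em_sf] em_add by blast
  then show ?thesis using em_uminus[OF b] by (simp only: diff_conv_add_uminus)
qed
lemma em_nz: "a \<in> F \<Longrightarrow> a \<noteq> 0 \<Longrightarrow> \<phi> a \<noteq> 0"
  using em_mult[of a "inverse a"] sf_inverse[OF em_sf] em_1 by auto
lemma em_inj: "inj_on \<phi> F"
proof (rule inj_onI)
  fix x y assume xy: "x \<in> F" "y \<in> F" "\<phi> x = \<phi> y"
  then have "\<phi> (x - y) = 0" by (simp add: em_diff)
  then show "x = y" using em_nz[of "x - y"] sf_diff[OF em_sf xy(1,2)] by auto
qed
lemma em_inverse: "a \<in> F \<Longrightarrow> \<phi> (inverse a) = inverse (\<phi> a)"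
  using em_mult[of a "inverse a"] sf_inverse[OF em_sf] em_1 em_0
  by (cases "a = 0") (auto simp: inverse_unique)
lemma em_power: "a \<in> F \<Longrightarrow> \<phi> (a ^ n) = \<phi> a ^ n"
  by (induction n) (auto simp: em_1 em_mult sf_power[OF em_sf])
lemma em_sum: "(\<And>i. i \<in> A \<Longrightarrow> f i \<in> F) \<Longrightarrow> \<phi> (sum f A) = (\<Sum>i\<in>A. \<phi> (f i))"
  by (induction A rule: infinite_finite_induct) (auto simp: em_0 em_add sf_sum[OF em_sf])
lemma em_prod: "(\<And>i. i \<in> A \<Longrightarrow> f i \<in> F) \<Longrightarrow> \<phi> (prod f A) = (\<Prod>i\<in>A. \<phi> (f i))"
  by (induction A rule: infinite_finite_induct) (auto simp: em_1 em_mult sf_prod[OF em_sf])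

lemma pm_coeff: "coeff (map_poly \<phi> f) n = \<phi> (coeff f n)"
  by (simp add: coeff_map_poly em_0)
lemma pm_add: "poly_over F f \<Longrightarrow> poly_over F g \<Longrightarrow> map_poly \<phi> (f + g) = map_poly \<phi> f + map_poly \<phi> g"
  by (rule poly_eqI) (simp add: pm_coeff em_add po_coeff)
lemma pm_uminus: "poly_over F f \<Longrightarrow> map_poly \<phi> (- f) = - map_poly \<phi> f"
  by (rule poly_eqI) (simp add: pm_coeff em_uminus po_coeff)
lemma pm_diff: "poly_over F f \<Longrightarrow> poly_over F g \<Longrightarrow> map_poly \<phi> (f - g) = map_poly \<phi> f - map_poly \<phi> g"
  by (rule poly_eqI) (simp add: pm_coeff em_diff po_coeff)
lemma pm_mult: "poly_over F f \<Longrightarrow> poly_over F g \<Longrightarrow> map_poly \<phi> (f * g) = map_poly \<phi> f * map_poly \<phi> g"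
  by (rule poly_eqI) (simp add: pm_coeff coeff_mult em_sum em_mult po_coeff sf_mult[OF em_sf])
lemma pm_const: "map_poly \<phi> [:a:] = [:\<phi> a:]"
  by (simp add: map_poly_pCons em_0)
lemma pm_degree: "poly_over F f \<Longrightarrow> degree (map_poly \<phi> f) = degree f"
proof -
  assume f: "poly_over F f"
  show ?thesis
  proof (cases "f = 0")
    case False
    then have "\<phi> (lead_coeff f) \<noteq> 0" using em_nz po_lead[OF f] by auto
    then have "degree f \<le> degree (map_poly \<phi> f)" by (simp add: le_degree pm_coeff)
    moreover have "degree (map_poly \<phi> f) \<le> degree f"
      by (rule degree_le) (simp add: pm_coeff coeff_eq_0 em_0)
    ultimately show ?thesis by simp
  qed simp
qed
lemma pm_poly: "poly_over F f \<Longrightarrow> z \<in> F \<Longrightarrow> \<phi> (poly f z) = poly (map_poly \<phi> f) (\<phi> z)"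
proof (induction f rule: pCons_induct)
  case (pCons a p)
  have a: "a \<in> F" and p: "poly_over F p" using pCons.prems by (auto simp: po_pCons)
  have pz: "poly p z \<in> F" using p pCons.prems(2)
    by (simp add: poly_altdef sf_sum[OF em_sf] sf_mult[OF em_sf] sf_power[OF em_sf] po_coeff)
  show ?case using pCons.IH[OF p pCons.prems(2)] a pz pCons.prems(2)
    by (simp add: map_poly_pCons em_0 em_add em_mult sf_mult[OF em_sf])
qed (simp add: em_0)
lemma pm_over_image: "poly_over F f \<Longrightarrow> poly_over (\<phi> ` F) (map_poly \<phi> f)"
  by (simp add: poly_over_def pm_coeff po_coeff)
lemma pm_id_on: "poly_over E f \<Longrightarrow> (\<And>z. z \<in> E \<Longrightarrow> \<phi> z = z) \<Longrightarrow> map_poly \<phi> f = f"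
  by (rule poly_eqI) (simp add: pm_coeff po_coeff)

end

lemma sep_dvd:
  assumes "separable_poly g" "a dvd g" shows "separable_poly a"
proof -
  obtain e where g: "g = a * e" using assms(2) by blast
  show ?thesis unfolding separable_poly_def
  proof (rule coprimeI)
    fix c assume c: "c dvd a" "c dvd pderiv a"
    have "c dvd g" using c g by simp
    moreover have "c dvd pderiv g" using c g by (simp add: pderiv_mult)
    ultimately show "is_unit c" using assms(1) coprime_common_divisor unfolding separable_poly_def by blast
  qed
qed

lemma emb_extend:
  assumes em: "emb F \<phi>" and m: "is_minpoly F y q" and y': "poly (map_poly \<phi> q) y' = 0"
  shows "\<exists>\<psi>. emb (adj F y) \<psi> \<and> (\<forall>z\<in>F. \<psi> z = \<phi> z) \<and> \<psi> y = y'"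
proof -
  have F: "is_subfield F" using em by (simp add: emb_def)
  have alg: "algebraic_over F y" using m unfolding is_minpoly_def algebraic_over_def by blast
  have q: "poly_over F q" using m by (simp add: is_minpoly_def)
  have wd: "poly (map_poly \<phi> f) y' = poly (map_poly \<phi> g) y'"
    if f: "poly_over F f" and g: "poly_over F g" and eq: "poly f y = poly g y" for f g
  proof -
    have fg: "poly_over F (f - g)" using F f g by (simp add: po_diff)
    obtain e where e: "poly_over F e" "f - g = q * e"
      using minpoly_dvd[OF F m fg] eq by auto
    have "map_poly \<phi> f - map_poly \<phi> g = map_poly \<phi> q * map_poly \<phi> e"
      using pm_diff[OF em f g] pm_mult[OF em q e(1)] e(2) by simp
    then have "poly (map_poly \<phi> f) y' - poly (map_poly \<phi> g) y' = 0"
      using y' by (simp only: poly_diff[symmetric] poly_mult mult_zero_left)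
    then show ?thesis by simp
  qed
  define rep where "rep z = (SOME f. poly_over F f \<and> poly f y = z)" for z
  have rep: "poly_over F (rep z) \<and> poly (rep z) y = z" if "z \<in> adj F y" for z
  proof -
    from that obtain f where "poly_over F f" "poly f y = z" by (auto simp: adj_def)
    then show ?thesis unfolding rep_def by (rule someI[where P="\<lambda>f. poly_over F f \<and> poly f y = z", OF conjI])
  qed
  define \<psi> where "\<psi> z = poly (map_poly \<phi> (rep z)) y'" for z
  have \<psi>: "\<psi> (poly f y) = poly (map_poly \<phi> f) y'" if "poly_over F f" for f
  proof -
    have "poly f y \<in> adj F y" using that by (auto simp: adj_def)
    then have r: "poly_over F (rep (poly f y))" "poly (rep (poly f y)) y = poly f y" using rep by blast+
    show ?thesis unfolding \<psi>_def by (rule wd[OF r(1) that r(2)])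
  qed
  have "emb (adj F y) \<psi>"
    unfolding emb_def
  proof (intro conjI ballI)
    show "is_subfield (adj F y)" by (rule adj_subfield[OF F alg])
    show "\<psi> 1 = 1" using \<psi>[OF po_1[OF F]] by (simp add: em_1[OF em])
  next
    fix a b assume "a \<in> adj F y" "b \<in> adj F y"
    then obtain f g where fg: "a = poly f y" "b = poly g y" "poly_over F f" "poly_over F g"
      by (auto simp: adj_def)
    show "\<psi> (a + b) = \<psi> a + \<psi> b"
      using \<psi>[OF po_add[OF F fg(3,4)]] \<psi>[OF fg(3)] \<psi>[OF fg(4)] fg pm_add[OF em fg(3,4)] by simp
    show "\<psi> (a * b) = \<psi> a * \<psi> b"
      using \<psi>[OF po_mult[OF F fg(3,4)]] \<psi>[OF fg(3)] \<psi>[OF fg(4)] fg pm_mult[OF em fg(3,4)] by simp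
  qed
  moreover have "\<psi> z = \<phi> z" if "z \<in> F" for z
    using \<psi>[OF po_const[OF F that]] by (simp add: pm_const[OF em])
  moreover have "\<psi> y = y'"
    using \<psi>[OF po_X[OF F]] by (simp add: map_poly_pCons em_0[OF em] em_1[OF em])
  ultimately show ?thesis by blast
qed



definition graph :: "'a set \<Rightarrow> ('a \<Rightarrow> 'a) \<Rightarrow> ('a \<times> 'a) set" where
  "graph F \<phi> = (\<lambda>z. (z, \<phi> z)) ` F"

lemma graph_mem: "(z, w) \<in> graph F \<phi> \<longleftrightarrow> z \<in> F \<and> w = \<phi> z"
  by (auto simp: graph_def)

lemma graph_sub: "graph F \<phi> \<subseteq> graph F' \<phi>' \<longleftrightarrow> F \<subseteq> F' \<and> (\<forall>z\<in>F. \<phi> z = \<phi>' z)"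
  by (auto simp: graph_def)

lemma sc_sf: "is_separable_closure_of k \<Longrightarrow> is_subfield k"
  by (simp add: is_separable_closure_of_def)
lemma sc_alg: "is_separable_closure_of k \<Longrightarrow> \<exists>g. g \<noteq> 0 \<and> poly_over k g \<and> separable_poly g \<and> poly g x = 0"
  by (simp add: is_separable_closure_of_def)
lemma sc_root: "is_separable_closure_of (k::'a::field set) \<Longrightarrow> degree (g::'a poly) > 0 \<Longrightarrow> separable_poly g \<Longrightarrow> \<exists>x. poly g x = 0"
  by (simp add: is_separable_closure_of_def)

lemma extend_total:
  assumes sc: "is_separable_closure_of k" and em0: "emb F0 \<phi>0" and kF0: "k \<subseteq> F0"
    and fix0: "\<And>z. z \<in> k \<Longrightarrow> \<phi>0 z = z"
  shows "\<exists>\<tau>. emb UNIV \<tau> \<and> (\<forall>z\<in>F0. \<tau> z = \<phi>0 z)"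
proof -
  define A where "A = {graph F \<phi> | F \<phi>. emb F \<phi> \<and> F0 \<subseteq> F \<and> (\<forall>z\<in>F0. \<phi> z = \<phi>0 z)}"
  have A0: "graph F0 \<phi>0 \<in> A" unfolding A_def using em0 by blast
  have "\<exists>U\<in>A. \<forall>X\<in>C. X \<subseteq> U" if C: "C \<in> chains A" for C
  proof (cases "C = {}")
    case True then show ?thesis using A0 by blast
  next
    case False
    have CA: "C \<subseteq> A" and cmp: "\<And>X Y. X \<in> C \<Longrightarrow> Y \<in> C \<Longrightarrow> X \<subseteq> Y \<or> Y \<subseteq> X"
      using C by (auto simp: chains_def chain_subset_def)
    have Cg: "\<exists>F' \<phi>'. X = graph F' \<phi>' \<and> emb F' \<phi>' \<and> F0 \<subseteq> F' \<and> (\<forall>z\<in>F0. \<phi>' z = \<phi>0 z)"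
      if "X \<in> C" for X using that CA unfolding A_def by blast
    define U where "U = \<Union>C"
    define F where "F = fst ` U"
    define \<phi> where "\<phi> z = (SOME w. (z, w) \<in> U)" for z
    have key: "w = \<phi>' z" if "graph F' \<phi>' \<in> C" "z \<in> F'" "(z, w) \<in> U" for F' \<phi>' z w
    proof -
      from that(3) obtain Y where Y: "Y \<in> C" "(z, w) \<in> Y" by (auto simp: U_def)
      from Cg[OF Y(1)] obtain F2 \<phi>2 where Y2: "Y = graph F2 \<phi>2" by blast
      have zw: "z \<in> F2" "w = \<phi>2 z" using Y(2) Y2 by (auto simp: graph_mem)
      from cmp[OF that(1) Y(1)] show ?thesis
      proof
        assume "graph F' \<phi>' \<subseteq> Y"
        then show ?thesis using that(2) zw Y2 by (auto simp: graph_sub)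
      next
        assume "Y \<subseteq> graph F' \<phi>'"
        then show ?thesis using Y(2) by (auto simp: graph_mem)
      qed
    qed
    have phi_eq: "z \<in> F \<and> \<phi> z = \<phi>' z" if "graph F' \<phi>' \<in> C" "z \<in> F'" for F' \<phi>' z
    proof -
      have "(z, \<phi>' z) \<in> graph F' \<phi>'" using that(2) by (simp add: graph_mem)
      then have zU: "(z, \<phi>' z) \<in> U" using that(1) unfolding U_def by blast
      then have "(z, \<phi> z) \<in> U" unfolding \<phi>_def by (rule someI)
      then show ?thesis using key[OF that] zU by (force simp: F_def)
    qed
    have inF: "\<exists>F' \<phi>'. graph F' \<phi>' \<in> C \<and> emb F' \<phi>' \<and> F0 \<subseteq> F' \<and> z \<in> F'" if "z \<in> F" for z
    proof -
      from that obtain w Y where Y: "Y \<in> C" "(z, w) \<in> Y" by (auto simp: F_def U_def)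
      from Cg[OF Y(1)] obtain F' \<phi>' where "Y = graph F' \<phi>'" "emb F' \<phi>'" "F0 \<subseteq> F'" by blast
      moreover have "z \<in> F'" using Y(2) calculation(1) by (simp add: graph_mem)
      ultimately show ?thesis using Y(1) by blast
    qed
    have two: "\<exists>F' \<phi>'. graph F' \<phi>' \<in> C \<and> emb F' \<phi>' \<and> a \<in> F' \<and> b \<in> F'" if ab: "a \<in> F" "b \<in> F" for a b
    proof -
      obtain F1 \<phi>1 where 1: "graph F1 \<phi>1 \<in> C" "emb F1 \<phi>1" "a \<in> F1" using inF[OF ab(1)] by blast
      obtain F2 \<phi>2 where 2: "graph F2 \<phi>2 \<in> C" "emb F2 \<phi>2" "b \<in> F2" using inF[OF ab(2)] by blast
      from cmp[OF 1(1) 2(1)] show ?thesis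
      proof
        assume "graph F1 \<phi>1 \<subseteq> graph F2 \<phi>2"
        then show ?thesis using 1 2 by (auto simp: graph_sub)
      next
        assume "graph F2 \<phi>2 \<subseteq> graph F1 \<phi>1"
        then show ?thesis using 1 2 by (auto simp: graph_sub)
      qed
    qed
    obtain G where G: "G \<in> C" using False by blast
    from Cg[OF G] obtain FG \<phi>G where FG: "G = graph FG \<phi>G" "emb FG \<phi>G" "F0 \<subseteq> FG"
      "\<forall>z\<in>F0. \<phi>G z = \<phi>0 z" by blast
    have G': "graph FG \<phi>G \<in> C" using G FG(1) by simp
    have sG: "is_subfield FG" using FG(2) by (rule em_sf)
    have "emb F \<phi>" unfolding emb_def is_subfield_def
    proof (intro conjI ballI)
      show "0 \<in> F" using phi_eq[OF G' sf_0[OF sG]] by simp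
      show "1 \<in> F" using phi_eq[OF G' sf_1[OF sG]] by simp
      show "\<phi> 1 = 1" using phi_eq[OF G' sf_1[OF sG]] em_1[OF FG(2)] by simp
    next
      fix a b assume ab: "a \<in> F" "b \<in> F"
      from two[OF ab] obtain F' \<phi>' where F': "graph F' \<phi>' \<in> C" "emb F' \<phi>'" "a \<in> F'" "b \<in> F'" by blast
      have s: "is_subfield F'" using F'(2) by (rule em_sf)
      show "a + b \<in> F" using phi_eq[OF F'(1) sf_add[OF s F'(3,4)]] by simp
      show "a * b \<in> F" using phi_eq[OF F'(1) sf_mult[OF s F'(3,4)]] by simp
      show "\<phi> (a + b) = \<phi> a + \<phi> b"
        using phi_eq[OF F'(1)] sf_add[OF s F'(3,4)] F'(3,4) em_add[OF F'(2)] by simp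
      show "\<phi> (a * b) = \<phi> a * \<phi> b"
        using phi_eq[OF F'(1)] sf_mult[OF s F'(3,4)] F'(3,4) em_mult[OF F'(2)] by simp
    next
      fix a assume a: "a \<in> F"
      from two[OF a a] obtain F' \<phi>' where F': "graph F' \<phi>' \<in> C" "emb F' \<phi>'" "a \<in> F'" by blast
      have s: "is_subfield F'" using F'(2) by (rule em_sf)
      show "- a \<in> F" using phi_eq[OF F'(1) sf_uminus[OF s F'(3)]] by simp
      show "inverse a \<in> F" using phi_eq[OF F'(1) sf_inverse[OF s F'(3)]] by simp
    qed
    moreover have "F0 \<subseteq> F" using FG(3) phi_eq[OF G'] by blast
    moreover have "\<forall>z\<in>F0. \<phi> z = \<phi>0 z" using FG(3,4) phi_eq[OF G'] by (simp add: subset_iff)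
    moreover have "U = graph F \<phi>"
    proof
      show "U \<subseteq> graph F \<phi>"
      proof
        fix P assume P: "P \<in> U"
        obtain z w where zw: "P = (z, w)" by force
        from P zw obtain Y where Y: "Y \<in> C" "(z, w) \<in> Y" by (auto simp: U_def)
        from Cg[OF Y(1)] obtain F2 \<phi>2 where Y2: "Y = graph F2 \<phi>2" by blast
        have "z \<in> F2" "w = \<phi>2 z" using Y Y2 by (auto simp: graph_mem)
        then show "P \<in> graph F \<phi>" using phi_eq[of F2 \<phi>2 z] Y Y2 zw by (auto simp: graph_mem)
      qed
    next
      show "graph F \<phi> \<subseteq> U"
      proof
        fix P assume "P \<in> graph F \<phi>"
        then obtain z where z: "z \<in> F" "P = (z, \<phi> z)" by (auto simp: graph_def)
        from inF[OF z(1)] obtain F' \<phi>' where F': "graph F' \<phi>' \<in> C" "z \<in> F'" by blast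
        have "(z, \<phi>' z) \<in> graph F' \<phi>'" using F'(2) by (simp add: graph_mem)
        moreover have "P = (z, \<phi>' z)" using phi_eq[OF F'] z by simp
        ultimately show "P \<in> U" using F'(1) unfolding U_def by blast
      qed
    qed
    ultimately have "U \<in> A" unfolding A_def mem_Collect_eq by (intro exI[of _ F] exI[of _ \<phi>]) simp
    then show ?thesis unfolding U_def by blast
  qed
  then have "\<forall>C\<in>chains A. \<exists>U\<in>A. \<forall>X\<in>C. X \<subseteq> U" by blast
  from Zorn_Lemma2[OF this] obtain M where M: "M \<in> A" and max0: "\<forall>X\<in>A. M \<subseteq> X \<longrightarrow> X = M"
    by (elim bexE)
  have max: "\<And>X. X \<in> A \<Longrightarrow> M \<subseteq> X \<Longrightarrow> X = M" using max0 by blast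
  from M have "\<exists>F \<phi>. M = graph F \<phi> \<and> emb F \<phi> \<and> F0 \<subseteq> F \<and> (\<forall>z\<in>F0. \<phi> z = \<phi>0 z)"
    unfolding A_def by (simp only: mem_Collect_eq)
  then obtain F \<phi> where Mg: "M = graph F \<phi>" and em: "emb F \<phi>" and F0F: "F0 \<subseteq> F"
    and ag: "\<forall>z\<in>F0. \<phi> z = \<phi>0 z" by (elim exE conjE)
  have Fs: "is_subfield F" using em by (rule em_sf)
  have "F = UNIV"
  proof (rule ccontr)
    assume "F \<noteq> UNIV"
    then obtain y where y: "y \<notin> F" by blast
    obtain g where g: "g \<noteq> 0" "poly_over k g" "separable_poly g" "poly g y = 0" using sc_alg[OF sc] by blast
    have gF: "poly_over F g" using po_mono[OF _ g(2)] kF0 F0F by blast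
    have "algebraic_over F y" using g gF unfolding algebraic_over_def by blast
    then obtain q where m: "is_minpoly F y q" using minpoly_exists by blast
    have qF: "poly_over F q" using m by (simp add: is_minpoly_def)
    obtain e where e: "poly_over F e" "g = q * e" using minpoly_dvd[OF Fs m gF g(4)] by blast
    have fk: "\<phi> z = z" if zk: "z \<in> k" for z
    proof -
      have "z \<in> F0" using zk kF0 by blast
      then have "\<phi> z = \<phi>0 z" using ag by blast
      then show ?thesis using fix0[OF zk] by simp
    qed
    have "map_poly \<phi> g = g" using pm_id_on[OF em g(2) fk] .
    then have "g = map_poly \<phi> q * map_poly \<phi> e" using pm_mult[OF em qF e(1)] e(2) by simp
    then have "separable_poly (map_poly \<phi> q)" using sep_dvd[OF g(3)] by (metis dvd_triv_left)
    moreover have "degree (map_poly \<phi> q) > 0" using pm_degree[OF em qF] minpoly_degree_pos[OF m] by simp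
    ultimately obtain y' where "poly (map_poly \<phi> q) y' = 0" using sc_root[OF sc] by blast
    from emb_extend[OF em m this] obtain \<psi> where \<psi>: "emb (adj F y) \<psi>" "\<forall>z\<in>F. \<psi> z = \<phi> z" by blast
    have FF: "F \<subseteq> adj F y" using adj_base[OF Fs] by blast
    have ag2: "\<forall>z\<in>F0. \<psi> z = \<phi>0 z" using \<psi>(2) ag F0F by (simp add: subset_iff)
    have "graph (adj F y) \<psi> \<in> A" unfolding A_def mem_Collect_eq
      using \<psi>(1) ag2 FF F0F by (intro exI[of _ "adj F y"] exI[of _ \<psi>]) (simp add: subset_trans[OF F0F FF])
    moreover have "M \<subseteq> graph (adj F y) \<psi>" unfolding Mg graph_sub using FF \<psi> by auto
    ultimately have "graph (adj F y) \<psi> = M" by (rule max)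
    moreover have "(y, \<psi> y) \<in> graph (adj F y) \<psi>" using adj_gen[OF Fs] by (simp add: graph_mem)
    ultimately have "(y, \<psi> y) \<in> graph F \<phi>" using Mg by simp
    then show False using y by (simp add: graph_mem)
  qed
  then show ?thesis using em ag by blast
qed

lemma total_emb_gal:
  assumes sc: "is_separable_closure_of k" and em: "emb UNIV \<tau>" and fix0: "\<And>z. z \<in> k \<Longrightarrow> \<tau> z = z"
  shows "\<tau> \<in> Gal k"
proof -
  have inj: "inj \<tau>" using em_inj[OF em] .
  have "surj \<tau>"
  proof -
    have "z \<in> range \<tau>" for z
    proof -
      obtain g where g: "g \<noteq> 0" "poly_over k g" "poly g z = 0" using sc_alg[OF sc] by blast
      let ?S = "{w. poly g w = 0}"
      have fin: "finite ?S" using g(1) poly_roots_finite by blast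
      have "\<tau> ` ?S \<subseteq> ?S"
      proof
        fix v assume "v \<in> \<tau> ` ?S"
        then obtain w where w: "poly g w = 0" "v = \<tau> w" by auto
        have "\<tau> (poly g w) = poly (map_poly \<tau> g) (\<tau> w)" using pm_poly[OF em po_mono[OF _ g(2)]] by blast
        moreover have "map_poly \<tau> g = g" using pm_id_on[OF em g(2)] fix0 by blast
        ultimately show "v \<in> ?S" using w em_0[OF em] by simp
      qed
      then have "\<tau> ` ?S = ?S" using endo_inj_surj[OF fin] inj inj_on_subset by blast
      then show ?thesis using g(3) by blast
    qed
    then show ?thesis by blast
  qed
  then have "bij \<tau>" using inj by (simp add: bij_def)
  then show ?thesis unfolding Gal_def using em_add[OF em] em_mult[OF em] fix0 by auto
qed

lemma gal_moves:
  assumes sc: "is_separable_closure_of k" and x: "x \<notin> k"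
  shows "\<exists>\<sigma>\<in>Gal k. \<sigma> x \<noteq> x"
proof -
  have ks: "is_subfield k" using sc by (rule sc_sf)
  obtain g where g: "g \<noteq> 0" "poly_over k g" "separable_poly g" "poly g x = 0" using sc_alg[OF sc] by blast
  have "algebraic_over k x" using g unfolding algebraic_over_def by blast
  then obtain q where m: "is_minpoly k x q" using minpoly_exists by blast
  have q: "poly_over k q" "q \<noteq> 0" "poly q x = 0" using m by (auto simp: is_minpoly_def)
  obtain e0 where "poly_over k e0" "g = q * e0" using minpoly_dvd[OF ks m g(2) g(4)] by blast
  then have qs: "separable_poly q" using sep_dvd[OF g(3)] by (metis dvd_triv_left)
  have dq: "degree q \<noteq> 1"
  proof
    assume d1: "degree q = 1"
    have "poly q x = (\<Sum>i\<le>1. coeff q i * x ^ i)" using d1 by (simp add: poly_altdef)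
    then have "coeff q 0 + x * coeff q 1 = 0" using q(3) by (simp add: mult.commute)
    moreover have "coeff q 1 \<noteq> 0" using d1 by (metis leading_coeff_0_iff q(2))
    ultimately have "x = - coeff q 0 / coeff q 1" by (simp add: field_simps eq_neg_iff_add_eq_0)
    then have "x \<in> k" using ks q(1) by (simp add: sf_divide sf_uminus po_coeff)
    then show False using x by simp
  qed
  have "[:-x, 1:] dvd q" using q(3) by (simp add: poly_eq_0_iff_dvd)
  then obtain e where qe: "q = [:-x, 1:] * e" by blast
  have e0: "e \<noteq> 0" using qe q(2) by auto
  have "degree q = degree [:-x, 1:] + degree e" using qe e0 by (metis degree_mult_eq pCons_eq_0_iff one_neq_zero)
  then have "degree q = 1 + degree e" by simp
  then have de: "degree e > 0" using dq minpoly_degree_pos[OF m] by simp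
  have "separable_poly e" using sep_dvd[OF qs] qe by (metis dvd_triv_right)
  then obtain x' where x': "poly e x' = 0" using sc_root[OF sc de] by blast
  have xx: "x' \<noteq> x"
  proof
    assume "x' = x"
    then have d1: "[:-x, 1:] dvd e" using x' by (simp add: poly_eq_0_iff_dvd)
    have "pderiv q = [:-x,1:] * pderiv e + e * pderiv [:-x,1:]" unfolding qe by (rule pderiv_mult)
    moreover have "pderiv [:-x, 1:] = 1" by (simp add: pderiv_pCons)
    ultimately have "pderiv q = [:-x,1:] * pderiv e + e" by simp
    then have "[:-x, 1:] dvd pderiv q" using d1 by (metis dvd_add dvd_triv_left)
    moreover have "[:-x, 1:] dvd q" unfolding qe by (rule dvd_triv_left)
    ultimately have "is_unit [:-x, 1 :: 'a:]" using qs coprime_common_divisor unfolding separable_poly_def by blast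
    then show False by (simp add: is_unit_pCons_iff)
  qed
  have emk: "emb k id" unfolding emb_def using ks by simp
  have "poly (map_poly id q) x' = 0" using qe x' by simp
  from emb_extend[OF emk m this] obtain \<psi> where \<psi>: "emb (adj k x) \<psi>" "\<forall>z\<in>k. \<psi> z = z" "\<psi> x = x'" by auto
  have "k \<subseteq> adj k x" using adj_base[OF ks] by blast
  from extend_total[OF sc \<psi>(1) this] \<psi>(2) obtain \<tau> where \<tau>: "emb UNIV \<tau>" "\<forall>z\<in>adj k x. \<tau> z = \<psi> z" by blast
  have fixk: "\<tau> z = z" if "z \<in> k" for z using \<tau>(2) \<psi>(2) adj_base[OF ks that] that by simp
  have "\<tau> x = x'" using \<tau>(2) adj_gen[OF ks] \<psi>(3) by simp
  then show ?thesis using total_emb_gal[OF sc \<tau>(1) fixk] xx by blast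
qed

lemma gal_fixed:
  assumes sc: "is_separable_closure_of k" and "\<forall>\<sigma>\<in>Gal k. \<sigma> x = x"
  shows "x \<in> k"
  using gal_moves[OF sc] assms(2) by blast



lemma gal_emb: assumes "is_subfield k" "\<sigma> \<in> Gal k" shows "emb UNIV \<sigma>"
  using assms unfolding Gal_def emb_def by (auto simp: sf_1 is_subfield_def)

lemma gal_fix: "\<sigma> \<in> Gal k \<Longrightarrow> z \<in> k \<Longrightarrow> \<sigma> z = z"
  by (simp add: Gal_def)

lemma gal_bij: "\<sigma> \<in> Gal k \<Longrightarrow> bij \<sigma>"
  by (simp add: Gal_def)

lemma gal_poly:
  assumes k: "is_subfield k" and s: "\<sigma> \<in> Gal k" and g: "poly_over k g"
  shows "\<sigma> (poly g z) = poly g (\<sigma> z)"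
proof -
  have em: "emb UNIV \<sigma>" by (rule gal_emb[OF k s])
  have "map_poly \<sigma> g = g" using pm_id_on[OF em g] gal_fix[OF s] by blast
  then show ?thesis using pm_poly[OF em po_mono[OF _ g]] by auto
qed

lemma gal_zero: assumes k: "is_subfield k" and s: "\<sigma> \<in> Gal k" shows "\<sigma> z = 0 \<longleftrightarrow> z = 0"
proof -
  have em: "emb UNIV \<sigma>" by (rule gal_emb[OF k s])
  show ?thesis using em_0[OF em] em_nz[OF em] by auto
qed

lemma gal_inv: "\<sigma> \<in> Gal k \<Longrightarrow> \<sigma> (inv \<sigma> z) = z" and gal_inv2: "\<sigma> \<in> Gal k \<Longrightarrow> inv \<sigma> (\<sigma> z) = z"
  by (auto simp: Gal_def bij_def surj_f_inv_f inv_f_f)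

lemma gal_Rts:
  assumes k: "is_subfield k" and s: "\<sigma> \<in> Gal k" and h: "poly_over k h"
  shows "\<sigma> z \<in> Rts h \<longleftrightarrow> z \<in> Rts h"
proof -
  have "poly h (\<sigma> z) = 0 \<longleftrightarrow> \<sigma> (poly h z) = 0" using gal_poly[OF k s h, of z] by simp
  also have "\<dots> \<longleftrightarrow> poly h z = 0" using gal_zero[OF k s] by blast
  finally show ?thesis by (simp add: Rts_def)
qed

lemma gal_inv_Rts:
  assumes k: "is_subfield k" and s: "\<sigma> \<in> Gal k" and h: "poly_over k h"
  shows "inv \<sigma> z \<in> Rts h \<longleftrightarrow> z \<in> Rts h"
  using gal_Rts[OF k s h, of "inv \<sigma> z"] gal_inv[OF s] by simp

lemma prod_roots_dvd:
  fixes h :: "'a::field poly"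
  assumes "h \<noteq> 0" "finite A"
  shows "(\<Prod>w\<in>A. [:-w, 1:] ^ order w h) dvd h"
  using assms(2)
proof (induction A rule: finite_induct)
  case (insert a A)
  let ?P = "\<Prod>w\<in>A. [:-w, 1:] ^ order w h"
  obtain q where q: "h = ?P * q" using insert.IH by blast
  have P0: "?P \<noteq> 0" by (simp add: prod_zero_iff insert.hyps)
  have "order a ?P = 0"
  proof (rule order_0I)
    show "poly ?P a \<noteq> 0" using insert.hyps(2) by (simp add: poly_prod prod_zero_iff insert.hyps(1))
  qed
  then have "order a h = order a q" using q order_mult[of ?P q a] assms(1) by simp
  then have "[:-a, 1:] ^ order a h dvd q" by (simp only: order_divides) simp
  then obtain q' where "q = [:-a, 1:] ^ order a h * q'" by blast
  then have "h = (\<Prod>w\<in>insert a A. [:-w, 1:] ^ order w h) * q'"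
    using q insert.hyps by (simp add: algebra_simps)
  then show ?case by (metis dvd_triv_left)
qed simp

lemma split_factor:
  fixes h :: "'a::field poly"
  assumes h0: "h \<noteq> 0" and mon: "lead_coeff h = 1" and sum: "(\<Sum>w\<in>Rts h. order w h) = degree h"
  shows "h = (\<Prod>w\<in>Rts h. [:-w, 1:] ^ order w h)"
proof -
  have fin: "finite (Rts h)" using h0 by (simp add: Rts_def poly_roots_finite)
  let ?P = "\<Prod>w\<in>Rts h. [:-w, 1:] ^ order w h"
  obtain q where q: "h = ?P * q" using prod_roots_dvd[OF h0 fin] by blast
  have P0: "?P \<noteq> 0" by (simp add: prod_zero_iff fin)
  have q0: "q \<noteq> 0" using q h0 by auto
  have dP: "degree ?P = (\<Sum>w\<in>Rts h. order w h)"
    by (subst degree_prod_eq_sum_degree) (auto simp: degree_power_eq)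
  have "degree h = degree ?P + degree q" using degree_mult_eq[OF P0 q0] q by simp
  then have dq: "degree q = 0" using dP sum by simp
  have "lead_coeff ?P = 1" by (simp add: lead_coeff_prod lead_coeff_power)
  moreover have "lead_coeff h = lead_coeff (?P * q)" using q by (rule arg_cong)
  ultimately have "lead_coeff q = 1" using mon by (simp add: lead_coeff_mult)
  then have "q = 1" using dq by (metis degree0_coeffs lead_coeff_pCons(2) one_pCons pCons_0_0 coeff_pCons_0)
  then show ?thesis using q by simp
qed

lemma poly_split:
  fixes h :: "'a::field poly"
  assumes "h \<noteq> 0" "lead_coeff h = 1" "(\<Sum>w\<in>Rts h. order w h) = degree h"
  shows "poly h x = (\<Prod>w\<in>Rts h. (x - w) ^ order w h)"
  by (subst split_factor[OF assms]) (simp add: poly_prod)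



lemma pth_root:
  fixes a :: "'a::field"
  assumes sc: "is_separable_closure_of (k::'a::field set)" and p: "p > 0" and pc: "of_nat p \<noteq> (0::'a)"
    and a: "a \<noteq> 0"
  shows "\<exists>b. b ^ p = a"
proof -
  let ?g = "monom (1::'a) p - [:a:]"
  have e: "?g = monom 1 p + [:-a:]" by (rule poly_eqI) (simp add: coeff_pCons split: nat.splits)
  have dg: "degree ?g = p" unfolding e using p by (subst degree_add_eq_left) (simp_all add: degree_monom_eq)
  have pd: "pderiv ?g = monom (of_nat p) (p - 1)" by (simp add: pderiv_diff pderiv_monom)
  have x1: "[:-0, 1:] = monom (1::'a) 1" by (simp add: monom_altdef)
  have "[:-0, 1:] * monom (of_nat p) (p - 1) = monom (of_nat p :: 'a) p"
    unfolding x1 mult_monom using p by simp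
  then have key: "[:-0, 1:] * pderiv ?g - smult (of_nat p) ?g = [:of_nat p * a:]"
    unfolding pd by (simp add: smult_monom smult_diff_right)
  have "separable_poly ?g" unfolding separable_poly_def
  proof (rule coprimeI)
    fix c assume c: "c dvd ?g" "c dvd pderiv ?g"
    then have "c dvd [:of_nat p * a:]" using key by (metis dvd_diff dvd_mult dvd_smult)
    moreover have "is_unit [:of_nat p * a:]" using pc a by (simp add: is_unit_const_poly_iff dvd_field_iff)
    ultimately show "is_unit c" by (rule dvd_unit_imp_unit)
  qed
  then obtain b where "poly ?g b = 0" using sc_root[OF sc, of ?g] dg p by auto
  then show ?thesis by (auto simp: poly_monom)
qed

lemma monic_pow_unique:
  fixes a b :: "'a::field poly"
  assumes eq: "a ^ p = b ^ p" and la: "lead_coeff a = 1" and lb: "lead_coeff b = 1"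
    and p: "p > 0" and pc: "of_nat p \<noteq> (0::'a)"
  shows "a = b"
proof -
  have a0: "a \<noteq> 0" and b0: "b \<noteq> 0" using la lb by auto
  have "p * degree a = p * degree b" using eq by (metis degree_power_eq a0 b0)
  then have dab: "degree a = degree b" using p by simp
  let ?d = "(p - 1) * degree a"
  let ?t = "\<lambda>i. b ^ (p - Suc i) * a ^ i"
  have ti: "coeff (?t i) ?d = 1" if "i < p" for i
  proof -
    have "degree (?t i) = (p - Suc i) * degree b + i * degree a"
      using a0 b0 by (simp add: degree_mult_eq degree_power_eq)
    also have "\<dots> = ((p - Suc i) + i) * degree a" using dab by (simp add: add_mult_distrib)
    also have "(p - Suc i) + i = p - 1" using that by simp
    finally have "degree (?t i) = ?d" .
    moreover have "lead_coeff (?t i) = 1" by (simp add: lead_coeff_mult lead_coeff_power la lb)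
    ultimately show ?thesis by simp
  qed
  have "coeff (\<Sum>i<p. ?t i) ?d = (\<Sum>i<p. coeff (?t i) ?d)" by (rule coeff_sum)
  also have "\<dots> = (\<Sum>i<p. 1)" by (rule sum.cong[OF refl], rule ti, simp)
  finally have "coeff (\<Sum>i<p. ?t i) ?d = of_nat p" by simp
  then have S0: "(\<Sum>i<p. ?t i) \<noteq> 0" using pc by auto
  have "(a - b) * (\<Sum>i<p. ?t i) = 0" using eq by (simp flip: power_diff_sumr2)
  then show ?thesis using S0 by simp
qed

lemma pm_power: "emb UNIV \<phi> \<Longrightarrow> map_poly \<phi> (f ^ n) = map_poly \<phi> f ^ n"
  by (induction n) (auto simp: em_1 pm_mult po_mono[of _ UNIV] poly_over_def)

lemma interp_exists:
  fixes f :: "'a::field \<Rightarrow> 'a"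
  shows "finite A \<Longrightarrow> \<exists>L. (\<forall>x\<in>A. poly L x = f x) \<and> degree L \<le> card A - 1"
proof (induction A rule: finite_induct)
  case empty then show ?case by (intro exI[of _ 0]) simp
next
  case (insert a A)
  from insert.IH obtain L where L: "\<forall>x\<in>A. poly L x = f x" "degree L \<le> card A - 1" by blast
  define P where "P = (\<Prod>w\<in>A. [:-w, 1:])"
  have Pa: "poly P a \<noteq> 0" using insert.hyps by (simp add: P_def poly_prod prod_zero_iff)
  have PA: "poly P x = 0" if "x \<in> A" for x
    using that insert.hyps(1) by (auto simp: P_def poly_prod prod_zero_iff)
  have dP: "degree P = card A" unfolding P_def
    by (subst degree_prod_eq_sum_degree) auto
  define L' where "L' = L + smult ((f a - poly L a) / poly P a) P"
  have "\<forall>x\<in>insert a A. poly L' x = f x" using L(1) PA Pa by (auto simp: L'_def)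
  moreover have "degree L' \<le> card (insert a A) - 1"
    unfolding L'_def using L(2) dP insert.hyps
    by (intro degree_add_le) (auto intro: order_trans[OF degree_smult_le])
  ultimately show ?case by blast
qed

lemma interp_descent:
  assumes sc: "is_separable_closure_of k" and h: "poly_over k h" "h \<noteq> 0"
    and inv: "\<forall>\<sigma>\<in>Gal k. \<forall>w\<in>Rts h. \<sigma> (\<alpha> (inv \<sigma> w)) = \<alpha> w"
  shows "\<exists>g. poly_over k g \<and> (\<forall>w\<in>Rts h. \<alpha> w = poly g w)"
proof -
  have ks: "is_subfield k" using sc by (rule sc_sf)
  have fin: "finite (Rts h)" using h(2) by (simp add: Rts_def poly_roots_finite)
  obtain L where L: "\<forall>x\<in>Rts h. poly L x = \<alpha> x" "degree L \<le> card (Rts h) - 1"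
    using interp_exists[OF fin] by blast
  show ?thesis
  proof (cases "Rts h = {}")
    case True then show ?thesis using ks by (intro exI[of _ 0]) (simp add: sf_0)
  next
    case False
    then have cR: "card (Rts h) > 0" using fin by (simp add: card_gt_0_iff)
    have "map_poly \<sigma> L = L" if s: "\<sigma> \<in> Gal k" for \<sigma>
    proof (rule poly_eqI_degree[of "Rts h"])
      have em: "emb UNIV \<sigma>" by (rule gal_emb[OF ks s])
      fix w assume w: "w \<in> Rts h"
      have iw: "inv \<sigma> w \<in> Rts h" using gal_inv_Rts[OF ks s h(1)] w by simp
      have "poly (map_poly \<sigma> L) w = poly (map_poly \<sigma> L) (\<sigma> (inv \<sigma> w))" using gal_inv[OF s] by simp
      also have "\<dots> = \<sigma> (poly L (inv \<sigma> w))" using pm_poly[OF em, of L "inv \<sigma> w"] by (simp add: poly_over_def)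
      also have "\<dots> = \<alpha> w" using L(1) iw inv s w by simp
      finally show "poly (map_poly \<sigma> L) w = poly L w" using L(1) w by simp
    next
      have em: "emb UNIV \<sigma>" by (rule gal_emb[OF ks s])
      show "degree (map_poly \<sigma> L) < card (Rts h)" "degree L < card (Rts h)"
        using pm_degree[OF em, of L] L(2) cR by (auto simp: poly_over_def)
    qed
    then have "coeff L i \<in> k" for i
      using gal_fixed[OF sc] pm_coeff[OF gal_emb[OF ks]] by metis
    then show ?thesis using L(1) by (intro exI[of _ L]) (auto simp: poly_over_def)
  qed
qed

lemma exists_coprime_order:
  assumes sc: "is_separable_closure_of k" and pr: "prime p" and pc: "of_nat p \<noteq> (0::'a::field)"
    and h: "poly_over k h" "lead_coeff h = 1" "degree h > 0"
    and pf: "\<forall>g. poly_over k g \<and> degree g > 0 \<longrightarrow> \<not> (g ^ p dvd h)"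
    and sum: "(\<Sum>w\<in>Rts h. order w h) = degree h"
  shows "\<exists>w\<in>Rts h. \<not> p dvd order w (h::'a poly)"
proof (rule ccontr)
  assume "\<not> ?thesis"
  then have dv: "\<And>w. w \<in> Rts h \<Longrightarrow> p dvd order w h" by blast
  have ks: "is_subfield k" using sc by (rule sc_sf)
  have p0: "p > 0" using pr by (simp add: prime_gt_0_nat)
  have h0: "h \<noteq> 0" using h(3) by auto
  define g where "g = (\<Prod>w\<in>Rts h. [:-w, 1:] ^ (order w h div p))"
  have "g ^ p = (\<Prod>w\<in>Rts h. [:-w, 1:] ^ (order w h div p * p))"
    by (simp add: g_def prod_power_distrib power_mult)
  also have "\<dots> = (\<Prod>w\<in>Rts h. [:-w, 1:] ^ order w h)"
    by (rule prod.cong) (auto simp: dv)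
  also have "\<dots> = h" using split_factor[OF h0 h(2) sum] by simp
  finally have gp: "g ^ p = h" .
  have lg: "lead_coeff g = 1" by (simp add: g_def lead_coeff_prod lead_coeff_power)
  have fixg: "map_poly \<sigma> g = g" if s: "\<sigma> \<in> Gal k" for \<sigma>
  proof (rule monic_pow_unique[OF _ _ lg p0 pc])
    have em: "emb UNIV \<sigma>" by (rule gal_emb[OF ks s])
    have "map_poly \<sigma> g ^ p = map_poly \<sigma> (g ^ p)" using pm_power[OF em] by simp
    also have "\<dots> = g ^ p" using gp pm_id_on[OF em h(1)] gal_fix[OF s] by simp
    finally show "map_poly \<sigma> g ^ p = g ^ p" .
    have "degree (map_poly \<sigma> g) = degree g" using pm_degree[OF em, of g] by (simp add: poly_over_def)
    then show "lead_coeff (map_poly \<sigma> g) = 1" using lg pm_coeff[OF em] em_1[OF em] by simp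
  qed
  have gk: "poly_over k g"
    unfolding poly_over_def using gal_fixed[OF sc] fixg pm_coeff[OF gal_emb[OF ks]] by metis
  have "degree g > 0"
  proof (rule ccontr)
    assume "\<not> degree g > 0"
    then have "degree (g ^ p) = 0" using degree_power_le[of g p] by simp
    then show False using gp h(3) by simp
  qed
  then show False using pf gk gp by auto
qed



lemma powi_prod: "(\<Prod>i\<in>A. f i) powi n = (\<Prod>i\<in>A. (f i :: 'a::field) powi n)"
  by (induction A rule: infinite_finite_induct) (auto simp: power_int_mult_distrib)

lemma powi_sum: "(c::'a::field) \<noteq> 0 \<Longrightarrow> (\<Prod>i\<in>A. c powi g i) = c powi (\<Sum>i\<in>A. g i)"
  by (induction A rule: infinite_finite_induct) (auto simp: power_int_add)

lemma wnorm_cong: "(\<And>w. w \<in> Rts h \<Longrightarrow> a w = b w) \<Longrightarrow> wnorm h a = wnorm h b"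
  unfolding wnorm_def by (rule prod.cong) auto

lemma wnorm_mult_pow: "wnorm h (\<lambda>w. a w * b w ^ p) = wnorm h a * wnorm h b ^ p"
  unfolding wnorm_def
  by (simp add: power_mult_distrib prod.distrib prod_power_distrib flip: power_mult)
     (simp add: mult.commute)

lemma wnorm_nz: "(\<And>w. w \<in> Rts h \<Longrightarrow> a w \<noteq> (0::'a::field)) \<Longrightarrow> wnorm h a \<noteq> 0"
  unfolding wnorm_def by (cases "finite (Rts h)") (auto simp: prod_zero_iff)

lemma good_pt:
  assumes "good_divisor p c h D" "D P \<noteq> 0"
  shows "snd P ^ p = c * poly h (fst P)" "snd P \<noteq> 0"
  using assms unfolding good_divisor_def good_points_def by auto

lemma fdiv_props:
  fixes h :: "'a::field poly"
  assumes g: "good_divisor p c h D" and c0: "c \<noteq> 0" and h0: "h \<noteq> 0" and mon: "lead_coeff h = 1"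
    and sum: "(\<Sum>w\<in>Rts h. order w h) = degree h" and p0: "p > 0"
  shows "\<forall>w\<in>Rts h. fst (fdiv h D) w \<noteq> 0" "\<forall>w. w \<notin> Rts h \<longrightarrow> fst (fdiv h D) w = 1"
    "snd (fdiv h D) \<noteq> 0"
    "c powi (div_degree D) * wnorm h (fst (fdiv h D)) = snd (fdiv h D) ^ p"
proof -
  let ?S = "{P. D P \<noteq> 0}"
  have fin: "finite ?S" using g by (simp add: good_divisor_def)
  have hx: "poly h (fst P) = snd P ^ p / c" if "P \<in> ?S" for P
    using good_pt[OF g] that c0 by (simp add: field_simps)
  have hx0: "poly h (fst P) \<noteq> 0" if "P \<in> ?S" for P
    using hx[OF that] good_pt(2)[OF g] that c0 p0 by simp
  have nr: "fst P - w \<noteq> 0" if "P \<in> ?S" "w \<in> Rts h" for P w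
    using hx0[OF that(1)] that(2) by (auto simp: Rts_def)
  show "\<forall>w\<in>Rts h. fst (fdiv h D) w \<noteq> 0"
    using nr fin by (auto simp: fdiv_def prod_zero_iff)
  show "\<forall>w. w \<notin> Rts h \<longrightarrow> fst (fdiv h D) w = 1" by (simp add: fdiv_def)
  show "snd (fdiv h D) \<noteq> 0" using good_pt(2)[OF g] fin by (auto simp: fdiv_def prod_zero_iff)
  have "wnorm h (fst (fdiv h D)) = (\<Prod>w\<in>Rts h. (\<Prod>P\<in>?S. (fst P - w) powi D P) ^ order w h)"
    unfolding wnorm_def fdiv_def by (rule prod.cong) auto
  also have "\<dots> = (\<Prod>w\<in>Rts h. \<Prod>P\<in>?S. ((fst P - w) ^ order w h) powi D P)"
    by (simp add: prod_power_distrib power_int_power' power_int_power mult.commute)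
  also have "\<dots> = (\<Prod>P\<in>?S. \<Prod>w\<in>Rts h. ((fst P - w) ^ order w h) powi D P)"
    by (rule prod.swap)
  also have "\<dots> = (\<Prod>P\<in>?S. (poly h (fst P)) powi D P)"
    by (simp add: powi_prod poly_split[OF h0 mon sum])
  also have "\<dots> = (\<Prod>P\<in>?S. (snd P powi D P) ^ p / c powi D P)"
    by (rule prod.cong) (auto simp: hx power_int_divide_distrib power_int_power' power_int_power mult.commute)
  also have "\<dots> = snd (fdiv h D) ^ p / c powi (div_degree D)"
    by (simp add: prod_dividef prod_power_distrib powi_sum[OF c0] fdiv_def div_degree_def)
  finally show "c powi (div_degree D) * wnorm h (fst (fdiv h D)) = snd (fdiv h D) ^ p"
    using c0 by simp
qed



lemma coset_rep:
  fixes k :: "'a::field set" and h :: "'a poly"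
  assumes sc: "is_separable_closure_of k" and pr: "prime p" and pc: "of_nat p \<noteq> (0::'a)"
    and hk: "poly_over k h" and mon: "lead_coeff h = 1" and dh: "degree h > 0"
    and pf: "\<forall>g. poly_over k g \<and> degree g > 0 \<longrightarrow> \<not> (g ^ p dvd h)"
    and sum: "(\<Sum>w\<in>Rts h. order w h) = degree h"
    and c0: "c \<noteq> 0" and g: "good_divisor p c h D"
    and \<alpha>: "\<alpha> \<in> Lbar_units h" and s0: "s \<noteq> 0" and rel: "c powi (div_degree D) * wnorm h \<alpha> = s ^ p"
  shows "\<exists>\<beta>\<in>Lbar_units h. (\<alpha>, s) = mmul (fdiv h D) (bd p h \<beta>)"
proof -
  have p0: "p > 0" using pr by (simp add: prime_gt_0_nat)
  have h0: "h \<noteq> 0" using dh by auto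
  note fp = fdiv_props[OF g c0 h0 mon sum p0]
  define fL where "fL = fst (fdiv h D)"
  define fk where "fk = snd (fdiv h D)"
  have fL0: "\<And>w. w \<in> Rts h \<Longrightarrow> fL w \<noteq> 0" and fL1: "\<And>w. w \<notin> Rts h \<Longrightarrow> fL w = 1"
    and fk0: "fk \<noteq> 0" and frel: "c powi (div_degree D) * wnorm h fL = fk ^ p"
    using fp by (auto simp: fL_def fk_def)
  have \<alpha>0: "\<And>w. w \<in> Rts h \<Longrightarrow> \<alpha> w \<noteq> 0" and \<alpha>1: "\<And>w. w \<notin> Rts h \<Longrightarrow> \<alpha> w = 1"
    using \<alpha> by (auto simp: Lbar_units_def)
  define u where "u w = \<alpha> w / fL w" for w
  have "\<forall>w. w \<in> Rts h \<longrightarrow> (\<exists>b. b ^ p = u w)"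
    using pth_root[OF sc p0 pc] \<alpha>0 fL0 by (auto simp: u_def)
  then obtain b where b: "\<And>w. w \<in> Rts h \<Longrightarrow> b w ^ p = u w" by metis
  define \<beta>0 where "\<beta>0 w = (if w \<in> Rts h then b w else 1)" for w
  have \<beta>0nz: "\<beta>0 w \<noteq> 0" for w
    using b \<alpha>0 fL0 p0 by (cases "w \<in> Rts h") (auto simp: \<beta>0_def u_def, metis divide_eq_0_iff zero_power)
  have \<beta>0p: "fL w * \<beta>0 w ^ p = \<alpha> w" if "w \<in> Rts h" for w
    using that b fL0 by (simp add: \<beta>0_def u_def)
  have "wnorm h \<alpha> = wnorm h (\<lambda>w. fL w * \<beta>0 w ^ p)" by (rule wnorm_cong) (simp add: \<beta>0p)
  also have "\<dots> = wnorm h fL * wnorm h \<beta>0 ^ p" by (rule wnorm_mult_pow)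
  finally have "c powi (div_degree D) * wnorm h fL * wnorm h \<beta>0 ^ p = s ^ p" using rel by (simp add: mult.assoc)
  then have "(fk * wnorm h \<beta>0) ^ p = s ^ p" using frel by (simp add: power_mult_distrib)
  then have N0p: "wnorm h \<beta>0 ^ p = (s / fk) ^ p" using fk0 by (simp add: power_divide power_mult_distrib field_simps)
  define v where "v = s / fk"
  have v0: "v \<noteq> 0" using s0 fk0 by (simp add: v_def)
  have N0: "wnorm h \<beta>0 \<noteq> 0" using \<beta>0nz by (intro wnorm_nz) auto
  define \<zeta> where "\<zeta> = wnorm h \<beta>0 / v"
  have "\<zeta> ^ p = wnorm h \<beta>0 ^ p / v ^ p" by (simp add: \<zeta>_def power_divide)
  then have \<zeta>p: "\<zeta> ^ p = 1" using N0p v0 by (simp add: v_def)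
  have \<zeta>0: "\<zeta> \<noteq> 0" using N0 v0 by (simp add: \<zeta>_def)
  obtain w0 where w0: "w0 \<in> Rts h" "\<not> p dvd order w0 h"
    using exists_coprime_order[OF sc pr pc hk mon dh pf sum] by blast
  define e where "e = order w0 h"
  have "coprime p e" using prime_imp_coprime[OF pr] w0(2) by (simp add: e_def)
  then have "gcd e p = 1" by (simp add: gcd.commute coprime_iff_gcd_eq_1)
  then have "gcd (int e) (int p) = 1" by (simp add: gcd_int_int_eq)
  then obtain x y :: int where xy: "x * int e + y * int p = 1" using bezout_int[of "int e" "int p"] by metis
  define \<iota> where "\<iota> = inverse \<zeta>"
  have \<iota>0: "\<iota> \<noteq> 0" and \<iota>p: "\<iota> ^ p = 1" using \<zeta>0 \<zeta>p by (auto simp: \<iota>_def power_inverse)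
  define \<eta> where "\<eta> = \<iota> powi x"
  have \<eta>p: "\<eta> ^ p = 1"
  proof -
    have "\<eta> ^ p = \<iota> powi (int p * x)" unfolding \<eta>_def by (simp add: power_int_power' mult.commute)
    also have "\<dots> = (\<iota> powi int p) powi x" by (rule power_int_mult)
    also have "\<iota> powi int p = 1" using \<iota>p by (simp add: power_int_of_nat)
    finally show ?thesis by simp
  qed
  have "\<eta> ^ e = \<iota> powi (x * int e)" unfolding \<eta>_def by (simp add: power_int_power')
  also have "x * int e = 1 + (- y) * int p" using xy by simp
  also have "\<iota> powi (1 + (- y) * int p) = \<iota> powi 1 * \<iota> powi (int p * (- y))"
    using \<iota>0 power_int_add[of \<iota> 1 "int p * (- y)"] by (simp add: mult.commute)
  also have "\<iota> powi (int p * (- y)) = (\<iota> powi int p) powi (- y)" by (rule power_int_mult)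
  also have "\<iota> powi int p = 1" using \<iota>p by (simp add: power_int_of_nat)
  finally have \<eta>e: "\<eta> ^ e = \<iota>" by simp
  have \<eta>0: "\<eta> \<noteq> 0" using \<iota>0 by (simp add: \<eta>_def power_int_not_zero)
  define \<beta> where "\<beta> = \<beta>0(w0 := \<beta>0 w0 * \<eta>)"
  have \<beta>p: "\<beta> w ^ p = \<beta>0 w ^ p" for w by (simp add: \<beta>_def power_mult_distrib \<eta>p)
  have fin: "finite (Rts h)" using h0 by (simp add: Rts_def poly_roots_finite)
  have "wnorm h \<beta> = \<beta> w0 ^ order w0 h * (\<Prod>w\<in>Rts h - {w0}. \<beta> w ^ order w h)"
    unfolding wnorm_def using fin w0(1) by (rule prod.remove)
  also have "(\<Prod>w\<in>Rts h - {w0}. \<beta> w ^ order w h) = (\<Prod>w\<in>Rts h - {w0}. \<beta>0 w ^ order w h)"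
    by (rule prod.cong) (auto simp: \<beta>_def)
  also have "\<beta> w0 ^ order w0 h = \<beta>0 w0 ^ order w0 h * \<iota>"
    using \<eta>e by (simp add: \<beta>_def power_mult_distrib e_def)
  finally have "wnorm h \<beta> = \<iota> * (\<beta>0 w0 ^ order w0 h * (\<Prod>w\<in>Rts h - {w0}. \<beta>0 w ^ order w h))"
    by (simp add: mult_ac)
  also have "\<beta>0 w0 ^ order w0 h * (\<Prod>w\<in>Rts h - {w0}. \<beta>0 w ^ order w h) = wnorm h \<beta>0"
    unfolding wnorm_def using fin w0(1) by (rule prod.remove[symmetric])
  finally have Nb: "wnorm h \<beta> = v" using \<zeta>0 v0 by (simp add: \<iota>_def \<zeta>_def)
  have \<beta>L: "\<beta> \<in> Lbar_units h"
  proof -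
    have bnz: "b w \<noteq> 0" if "w \<in> Rts h" for w using \<beta>0nz[of w] that by (simp add: \<beta>0_def)
    show ?thesis using bnz \<eta>0 w0(1) unfolding Lbar_units_def \<beta>_def by (auto simp: \<beta>0_def)
  qed
  have "(\<alpha>, s) = mmul (fdiv h D) (bd p h \<beta>)"
  proof -
    have "(\<lambda>w. fL w * \<beta> w ^ p) = \<alpha>"
    proof
      fix w show "fL w * \<beta> w ^ p = \<alpha> w"
        using \<beta>0p \<alpha>1 fL1 \<beta>p by (cases "w \<in> Rts h") (auto simp: \<beta>0_def)
    qed
    moreover have "fk * wnorm h \<beta> = s" using Nb fk0 by (simp add: v_def)
    ultimately show ?thesis by (simp add: mmul_def bd_def fL_def fk_def)
  qed
  then show ?thesis using \<beta>L by blast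
qed



lemma main_sets:
  fixes k :: "'a::field set" and h :: "'a poly"
  assumes sc: "is_separable_closure_of k" and pr: "prime p" and pc: "of_nat p \<noteq> (0::'a)"
    and hk: "poly_over k h" and mon: "lead_coeff h = 1" and dh: "degree h > 0"
    and pf: "\<forall>g. poly_over k g \<and> degree g > 0 \<longrightarrow> \<not> (g ^ p dvd h)"
    and sum: "(\<Sum>w\<in>Rts h. order w h) = degree h"
    and c0: "c \<noteq> 0" and g: "good_divisor p c h D"
  shows "{(\<alpha>, s). \<alpha> \<in> L_units k h \<and> s \<in> k \<and> s \<noteq> 0 \<and> c powi (div_degree D) * wnorm h \<alpha> = s ^ p}
       = invariants k h (mcoset (fdiv h D) (bd p h ` Lbar_units h))" (is "?L = ?R")
proof
  have ks: "is_subfield k" using sc by (rule sc_sf)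
  have p0: "p > 0" using pr by (simp add: prime_gt_0_nat)
  have h0: "h \<noteq> 0" using dh by auto
  note fp = fdiv_props[OF g c0 h0 mon sum p0]
  show "?L \<subseteq> ?R"
  proof
    fix m assume "m \<in> ?L"
    then obtain \<alpha> s where m: "m = (\<alpha>, s)" and \<alpha>: "\<alpha> \<in> L_units k h" and s: "s \<in> k" "s \<noteq> 0"
      and rel: "c powi (div_degree D) * wnorm h \<alpha> = s ^ p" by blast
    have \<alpha>L: "\<alpha> \<in> Lbar_units h" using \<alpha> by (simp add: L_units_def)
    obtain q where q: "poly_over k q" "\<forall>w\<in>Rts h. \<alpha> w = poly q w" using \<alpha> by (auto simp: L_units_def)
    obtain \<beta> where \<beta>: "\<beta> \<in> Lbar_units h" "(\<alpha>, s) = mmul (fdiv h D) (bd p h \<beta>)"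
      using coset_rep[OF sc pr pc hk mon dh pf sum c0 g \<alpha>L s(2) rel] by blast
    have "m \<in> mcoset (fdiv h D) (bd p h ` Lbar_units h)"
      unfolding mcoset_def using \<beta> m by blast
    moreover have "gact h \<sigma> m = m" if \<sigma>: "\<sigma> \<in> Gal k" for \<sigma>
    proof -
      have "(\<lambda>w. if w \<in> Rts h then \<sigma> (\<alpha> (inv \<sigma> w)) else 1) = \<alpha>"
      proof
        fix w show "(if w \<in> Rts h then \<sigma> (\<alpha> (inv \<sigma> w)) else 1) = \<alpha> w"
        proof (cases "w \<in> Rts h")
          case True
          then have iw: "inv \<sigma> w \<in> Rts h" using gal_inv_Rts[OF ks \<sigma> hk] by simp
          have "\<sigma> (\<alpha> (inv \<sigma> w)) = \<sigma> (poly q (inv \<sigma> w))" using q(2) iw by simp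
          also have "\<dots> = poly q (\<sigma> (inv \<sigma> w))" by (rule gal_poly[OF ks \<sigma> q(1)])
          also have "\<dots> = \<alpha> w" using gal_inv[OF \<sigma>] q(2) True by simp
          finally show ?thesis using True by simp
        next
          case False then show ?thesis using \<alpha>L by (simp add: Lbar_units_def)
        qed
      qed
      moreover have "\<sigma> s = s" using gal_fix[OF \<sigma> s(1)] .
      moreover have "gact h \<sigma> m = ((\<lambda>w. if w \<in> Rts h then \<sigma> (\<alpha> (inv \<sigma> w)) else 1), \<sigma> s)"
        unfolding m gact_def fst_conv snd_conv ..
      ultimately show ?thesis using m by simp
    qed
    ultimately show "m \<in> ?R" unfolding invariants_def by blast
  qed
  show "?R \<subseteq> ?L"
  proof
    fix m assume "m \<in> ?R"
    then have mT: "m \<in> mcoset (fdiv h D) (bd p h ` Lbar_units h)" and inv: "\<And>\<sigma>. \<sigma> \<in> Gal k \<Longrightarrow> gact h \<sigma> m = m"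
      unfolding invariants_def by blast+
    then obtain \<beta> where \<beta>: "\<beta> \<in> Lbar_units h" "m = mmul (fdiv h D) (bd p h \<beta>)"
      unfolding mcoset_def by blast
    define fL where "fL = fst (fdiv h D)"
    define fk where "fk = snd (fdiv h D)"
    have fL0: "\<And>w. w \<in> Rts h \<Longrightarrow> fL w \<noteq> 0" and fL1: "\<And>w. w \<notin> Rts h \<Longrightarrow> fL w = 1"
      and fk0: "fk \<noteq> 0" and frel: "c powi (div_degree D) * wnorm h fL = fk ^ p"
      using fp by (auto simp: fL_def fk_def)
    have \<beta>0: "\<And>w. w \<in> Rts h \<Longrightarrow> \<beta> w \<noteq> 0" and \<beta>1: "\<And>w. w \<notin> Rts h \<Longrightarrow> \<beta> w = 1"
      using \<beta>(1) by (auto simp: Lbar_units_def)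
    define \<alpha> where "\<alpha> = (\<lambda>w. fL w * \<beta> w ^ p)"
    define s where "s = fk * wnorm h \<beta>"
    have m2: "m = (\<alpha>, s)" using \<beta>(2) by (simp add: mmul_def bd_def \<alpha>_def s_def fL_def fk_def)
    have \<alpha>L: "\<alpha> \<in> Lbar_units h" using fL0 fL1 \<beta>0 \<beta>1 by (auto simp: Lbar_units_def \<alpha>_def)
    have "\<forall>\<sigma>\<in>Gal k. \<forall>w\<in>Rts h. \<sigma> (\<alpha> (inv \<sigma> w)) = \<alpha> w"
    proof (intro ballI)
      fix \<sigma> w assume \<sigma>: "\<sigma> \<in> Gal k" and w: "w \<in> Rts h"
      have "fst (gact h \<sigma> m) w = fst m w" using inv[OF \<sigma>] by simp
      then show "\<sigma> (\<alpha> (inv \<sigma> w)) = \<alpha> w" using w m2 by (simp add: gact_def)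
    qed
    from interp_descent[OF sc hk h0 this] obtain q where "poly_over k q" "\<forall>w\<in>Rts h. \<alpha> w = poly q w"
      by blast
    then have \<alpha>k: "\<alpha> \<in> L_units k h" using \<alpha>L by (auto simp: L_units_def)
    have sk: "s \<in> k"
    proof (rule gal_fixed[OF sc], intro ballI)
      fix \<sigma> assume \<sigma>: "\<sigma> \<in> Gal k"
      have "snd (gact h \<sigma> m) = snd m" using inv[OF \<sigma>] by simp
      then show "\<sigma> s = s" using m2 by (simp add: gact_def)
    qed
    have s0: "s \<noteq> 0" using fk0 wnorm_nz[of h \<beta>] \<beta>0 by (simp add: s_def)
    have "c powi (div_degree D) * wnorm h \<alpha> = c powi (div_degree D) * wnorm h fL * wnorm h \<beta> ^ p"
      unfolding \<alpha>_def wnorm_mult_pow by (simp add: mult.assoc)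
    also have "\<dots> = s ^ p" using frel by (simp add: s_def power_mult_distrib)
    finally show "m \<in> ?L" using m2 \<alpha>k sk s0 by simp
  qed
qed

theorem lemma4p3:
  fixes k :: "'a::field set" and p :: nat and c :: 'a and h :: "'a poly" and r :: int
  assumes "prime p"
    and "is_separable_closure_of k"
    and "of_nat p \<noteq> (0::'a)"
    and "\<forall>z::'a. z ^ p = 1 \<longrightarrow> z \<in> k"
    and "c \<in> k" and "c \<noteq> 0"
    and "poly_over k h" and "lead_coeff h = 1" and "degree h > 0"
    and "\<forall>g. poly_over k g \<and> degree g > 0 \<longrightarrow> \<not> (g ^ p dvd h)"
    and "p dvd degree h"
    and "(\<Sum>\<omega>\<in>Rts h. order \<omega> h) = degree h"
  shows "(\<forall>D. good_divisor p c h D \<and> div_degree D = r \<longrightarrow>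
            Hcal k p c h r = (\<lambda>m. mcoset m (Hsub k p h)) `
               invariants k h (mcoset (fdiv h D) (bd p h ` Lbar_units h)))
       \<and> Hcal k p c h 0 = (\<lambda>m. mcoset m (Hsub k p h)) ` invariants k h (bd p h ` Lbar_units h)"
proof -
  note ms = main_sets[OF assms(2,1,3,7,8,9,10,12,6)]
  have A: "Hcal k p c h r = (\<lambda>m. mcoset m (Hsub k p h)) `
               invariants k h (mcoset (fdiv h D) (bd p h ` Lbar_units h))"
    if "good_divisor p c h D" "div_degree D = r" for D
    unfolding Hcal_def using ms[OF that(1)] that(2) by simp
  have g0: "good_divisor p c h (\<lambda>_. 0)" by (simp add: good_divisor_def)
  have d0: "div_degree (\<lambda>_. 0) = (0::int)" by (simp add: div_degree_def)
  have f0: "fdiv h (\<lambda>_. 0) = ((\<lambda>_. 1), 1)" by (simp add: fdiv_def fun_eq_iff)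
  have mc: "mcoset ((\<lambda>_. 1), 1) X = X" for X :: "(('a \<Rightarrow> 'a) \<times> 'a) set"
    by (simp add: mcoset_def mmul_def)
  have E: "{(\<alpha>, s). \<alpha> \<in> L_units k h \<and> s \<in> k \<and> s \<noteq> 0 \<and> c powi 0 * wnorm h \<alpha> = s ^ p}
       = invariants k h (bd p h ` Lbar_units h)"
    using ms[OF g0] by (simp only: d0 f0 mc)
  have "Hcal k p c h 0 = (\<lambda>m. mcoset m (Hsub k p h)) ` invariants k h (bd p h ` Lbar_units h)"
    unfolding Hcal_def by (simp only: E)
  then show ?thesis using A by blast
qed

end
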